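(* Let $m\geq 2$, $h\geq 1$, and $G=T^+_{m,h}$ with root $r$, stem $r'$, and children $r_1,\dots,r_m$ of $r$. If $S$ is a Type II set for $G$, then $N_G[r]\setminus\mathcal{P}^\infty(S)=\{r',r_i\}$ for some $i\in[m]$ if $h$ is odd, and $N_G[r]\setminus\mathcal{P}^\infty(S)=\{r',r\}$ if $h$ is even. Furthermore, for all $k\ge0$, $$H^k_{m,h}=\begin{cases}\langle\mathcal{H}^{1}\oplus\mathcal{E}^{m-1}\rangle^k_{m,h-1}, & h\text{ odd},\\ \langle\mathcal{H}^{m}\oplus\mathcal{E}^{0}\rangle^k_{m,h-1}, & h\text{ even},\end{cases}$$ and $$E^k_{m,h}=\begin{cases}\langle\mathcal{H}^{0}\oplus\mathcal{E}^{m}\rangle^k_{m,h-1}+\sum_{\ell=0}^{m}\langle\mathcal{H}^{\ell}\oplus\mathcal{E}^{m-\ell}\rangle^{k-1}_{m,h-1}, & h\text{ odd},\\ \sum_{\ell=0}^{m-1}\langle\mathcal{H}^{\ell}\oplus\mathcal{E}^{m-\ell}\rangle^k_{m,h-1}+\sum_{\ell=0}^{m}\langle\mathcal{H}^{\ell}\oplus\mathcal{E}^{m-\ell}\rangle^{k-1}_{m,h-1}, & h\text{ even}.\end{cases}$$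
   Context: Power domination: for a graph $G=(V,E)$ and $S\subseteq V$, $\mathcal{P}^0(S)=N[S]$ and for $k\ge1$, $\mathcal{P}^k(S)=\mathcal{P}^{k-1}(S)\cup N^*(\mathcal{P}^{k-1}(S))$, where $x\in N^*(A)$ iff some $a\in A$ has $x$ as its only neighbor not in $A$; $\mathcal{P}^\infty(S)$ is the stable value (the set of observed vertices), and $S$ is a power dominating set if $\mathcal{P}^\infty(S)=V$. $T_{m,h}$ is the complete $m$-ary tree of height $h$ rooted at $r$; $T^+_{m,h}$ is $T_{m,h}$ plus a new vertex $r'$ (stem) joined to $r$. For $G=T^+_{m,h}$, a set $S\subseteq V(G)\setminus\{r'\}$ is Type I if it is a power dominating set for $G$; Type II if it is not but $S\cup\{r'\}$ is; Type 0 otherwise. $E^k_{m,h}$ and $H^k_{m,h}$ denote the numbers of Type I and Type II sets of size $k$ for $T^+_{m,h}$ (zero for $k<0$). Define $$\langle\mathcal{H}^{\ell}\oplus\mathcal{E}^{m-\ell}\rangle^k_{m,h}=\sum \binom{m}{\ell}\binom{\ell}{s_0,\dots,s_k}\binom{m-\ell}{t_0,\dots,t_k}\Big(\prod_{j=1}^{\ell}H^{i_j}_{m,h}\Big)\Big(\prod_{j=\ell+1}^{m}E^{i_j}_{m,h}\Big),$$ the sum over all tuples of nonnegative integers $(i_1,\dots,i_m)$ with $i_1\le\cdots\le i_\ell$, $i_{\ell+1}\le\cdots\le i_m$, and $i_1+\cdots+i_m=k$, where $s_\alpha=|\{j\in[\ell]:i_j=\alpha\}|$ and $t_\beta=|\{j\in[\ell+1,m]:i_j=\beta\}|$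 (empty sum $=0$ for $k<0$). *)

theory Defs
  imports Main
begin

definition closed_nbhd :: "'a set \<Rightarrow> ('a \<Rightarrow> 'a \<Rightarrow> bool) \<Rightarrow> 'a set \<Rightarrow> 'a set" where
  "closed_nbhd V E S = S \<union> {v \<in> V. \<exists>s\<in>S. E s v}"

definition forced :: "'a set \<Rightarrow> ('a \<Rightarrow> 'a \<Rightarrow> bool) \<Rightarrow> 'a set \<Rightarrow> 'a set" where
  "forced V E A = {x \<in> V. \<exists>a\<in>A. x \<notin> A \<and> E a x \<and> (\<forall>y\<in>V. E a y \<and> y \<notin> A \<longrightarrow> y = x)}"

fun pd_obs :: "'a set \<Rightarrow> ('a \<Rightarrow> 'a \<Rightarrow> bool) \<Rightarrow> 'a set \<Rightarrow> nat \<Rightarrow> 'a set" where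
  "pd_obs V E S 0 = closed_nbhd V E S"
| "pd_obs V E S (Suc k) = pd_obs V E S k \<union> forced V E (pd_obs V E S k)"

definition pd_obs_inf :: "'a set \<Rightarrow> ('a \<Rightarrow> 'a \<Rightarrow> bool) \<Rightarrow> 'a set \<Rightarrow> 'a set" where
  "pd_obs_inf V E S = (\<Union>k. pd_obs V E S k)"

definition power_dominating :: "'a set \<Rightarrow> ('a \<Rightarrow> 'a \<Rightarrow> bool) \<Rightarrow> 'a set \<Rightarrow> bool" where
  "power_dominating V E S \<longleftrightarrow> S \<subseteq> V \<and> pd_obs_inf V E S = V"

(* T^+_{m,h}: vertices None = stem r', Some xs = tree vertex addressed by the
   path xs from the root r = Some []; children of Some xs are Some (xs @ [i]), i < m. *)

definition tverts :: "nat \<Rightarrow> nat \<Rightarrow> nat list option set" where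
  "tverts m h = insert None (Some ` {xs. length xs \<le> h \<and> (\<forall>x\<in>set xs. x < m)})"

definition tadj :: "nat \<Rightarrow> nat \<Rightarrow> nat list option \<Rightarrow> nat list option \<Rightarrow> bool" where
  "tadj m h u v \<longleftrightarrow> u \<in> tverts m h \<and> v \<in> tverts m h \<and>
     ((u = None \<and> v = Some []) \<or> (u = Some [] \<and> v = None) \<or>
      (\<exists>xs i. u = Some xs \<and> v = Some (xs @ [i])) \<or>
      (\<exists>xs i. v = Some xs \<and> u = Some (xs @ [i])))"

definition typeI :: "nat \<Rightarrow> nat \<Rightarrow> nat list option set \<Rightarrow> bool" where
  "typeI m h S \<longleftrightarrow> S \<subseteq> tverts m h - {None} \<and> power_dominating (tverts m h) (tadj m h) S"

definition typeII :: "nat \<Rightarrow> nat \<Rightarrow> nat list option set \<Rightarrow> bool" where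
  "typeII m h S \<longleftrightarrow> S \<subseteq> tverts m h - {None} \<and> \<not> power_dominating (tverts m h) (tadj m h) S
     \<and> power_dominating (tverts m h) (tadj m h) (insert None S)"

(* E^k_{m,h} and H^k_{m,h}; k is an integer, and both are 0 for k < 0 *)
definition Ecnt :: "nat \<Rightarrow> nat \<Rightarrow> int \<Rightarrow> nat" where
  "Ecnt m h k = card {S. typeI m h S \<and> int (card S) = k}"

definition Hcnt :: "nat \<Rightarrow> nat \<Rightarrow> int \<Rightarrow> nat" where
  "Hcnt m h k = card {S. typeII m h S \<and> int (card S) = k}"

definition multinom :: "nat \<Rightarrow> (nat \<Rightarrow> nat) \<Rightarrow> nat \<Rightarrow> nat" where
  "multinom n s k = fact n div (\<Prod>\<alpha>\<le>k. fact (s \<alpha>))"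

(* <H^l (+) E^(m-l)>^k_{m,h}; a tuple (i_1,...,i_m) is the list xs, with
   (i_1..i_l) = take l xs and (i_{l+1}..i_m) = drop l xs *)
definition bracket :: "nat \<Rightarrow> nat \<Rightarrow> nat \<Rightarrow> int \<Rightarrow> nat" where
  "bracket m h l k =
    (\<Sum>xs \<in> {xs. length xs = m \<and> sorted (take l xs) \<and> sorted (drop l xs) \<and> int (sum_list xs) = k}.
       (m choose l)
       * multinom l (\<lambda>\<alpha>. count_list (take l xs) \<alpha>) (nat k)
       * multinom (m - l) (\<lambda>\<beta>. count_list (drop l xs) \<beta>) (nat k)
       * prod_list (map (\<lambda>i. Hcnt m h (int i)) (take l xs))
       * prod_list (map (\<lambda>i. Ecnt m h (int i)) (drop l xs)))"

end

theory Submission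
  imports Defs "HOL-Computational_Algebra.Formal_Power_Series" "HOL-Combinatorics.Multiset_Permutations"
begin

unbundle fps_syntax


lemma forced_sub: "forced V E A \<subseteq> V" by (auto simp: forced_def)

lemma pd_obs_mono_k: "pd_obs V E S k \<subseteq> pd_obs V E S (Suc k)" by auto

lemma pd_obs_mono_le: "k \<le> k' \<Longrightarrow> pd_obs V E S k \<subseteq> pd_obs V E S k'"
  by (induction k' rule: dec_induct) (auto)

lemma forced_mono_aux:
  assumes "A \<subseteq> X" shows "forced V E A \<subseteq> X \<union> forced V E X"
  using assms unfolding forced_def by blast

lemma pd_least:
  assumes "closed_nbhd V E S \<subseteq> X" "forced V E X \<subseteq> X"
  shows "pd_obs_inf V E S \<subseteq> X"
proof -
  have "pd_obs V E S k \<subseteq> X" for k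
  proof (induction k)
    case 0 then show ?case using assms by simp
  next
    case (Suc k)
    have "forced V E (pd_obs V E S k) \<subseteq> X \<union> forced V E X" by (rule forced_mono_aux[OF Suc.IH])
    then show ?case using Suc.IH assms(2) by (simp only: pd_obs.simps) blast
  qed
  then show ?thesis unfolding pd_obs_inf_def by blast
qed

lemma nbhd_sub_pd: "closed_nbhd V E S \<subseteq> pd_obs_inf V E S"
  unfolding pd_obs_inf_def by (metis UNIV_I UN_upper pd_obs.simps(1))

lemma S_sub_pd: "S \<subseteq> pd_obs_inf V E S"
  using nbhd_sub_pd[of V E S] unfolding closed_nbhd_def by blast

lemma nbr_in_pd: "s \<in> S \<Longrightarrow> v \<in> V \<Longrightarrow> E s v \<Longrightarrow> v \<in> pd_obs_inf V E S"
proof -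
  assume a: "s \<in> S" "v \<in> V" "E s v"
  then have "v \<in> closed_nbhd V E S" unfolding closed_nbhd_def by blast
  then show ?thesis using nbhd_sub_pd[of V E S] by (rule subsetD[rotated])
qed

lemma in_pd: "s \<in> S \<Longrightarrow> s \<in> pd_obs_inf V E S"
  using S_sub_pd[of S V E] by (rule subsetD)

lemma pd_sub: "S \<subseteq> V \<Longrightarrow> pd_obs_inf V E S \<subseteq> V"
proof -
  assume "S \<subseteq> V"
  have "pd_obs V E S k \<subseteq> V" for k
  proof (induction k)
    case 0 then show ?case using \<open>S \<subseteq> V\<close> by (auto simp: closed_nbhd_def)
  next
    case (Suc k) then show ?case using forced_sub[of V E] by auto
  qed
  then show ?thesis unfolding pd_obs_inf_def by blast
qed

lemma pd_closed:
  assumes fin: "finite V"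
  shows "forced V E (pd_obs_inf V E S) \<subseteq> pd_obs_inf V E S"
proof
  fix x assume x: "x \<in> forced V E (pd_obs_inf V E S)"
  then obtain a where a: "a \<in> pd_obs_inf V E S" "x \<notin> pd_obs_inf V E S" "E a x" "x \<in> V"
    and oth: "\<forall>y\<in>V. E a y \<and> y \<notin> pd_obs_inf V E S \<longrightarrow> y = x"
    unfolding forced_def by blast
  define W where "W = {y\<in>V. E a y \<and> y \<noteq> x}"
  have finW: "finite W" using fin unfolding W_def by auto
  have "\<forall>y\<in>W. \<exists>k. y \<in> pd_obs V E S k" using oth unfolding W_def pd_obs_inf_def by blast
  then obtain kf where kf: "\<forall>y\<in>W. y \<in> pd_obs V E S (kf y)" by metis
  obtain ka where ka: "a \<in> pd_obs V E S ka" using a(1) unfolding pd_obs_inf_def by blast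
  define K where "K = max ka (Max (kf ` W))"
  have "a \<in> pd_obs V E S K" using ka pd_obs_mono_le[of ka K V E S] unfolding K_def by auto
  moreover have "\<forall>y\<in>W. y \<in> pd_obs V E S K"
  proof
    fix y assume "y \<in> W"
    then have "kf y \<le> Max (kf ` W)" using finW by simp
    then have "kf y \<le> K" unfolding K_def by simp
    then show "y \<in> pd_obs V E S K" using kf \<open>y\<in>W\<close> pd_obs_mono_le[of "kf y" K V E S] by blast
  qed
  moreover have "x \<notin> pd_obs V E S K" using a(2) unfolding pd_obs_inf_def by blast
  ultimately have "x \<in> forced V E (pd_obs V E S K)"
    unfolding forced_def W_def using a by blast
  then have "x \<in> pd_obs V E S (Suc K)" by simp
  then show "x \<in> pd_obs_inf V E S" unfolding pd_obs_inf_def by (rule UN_I[OF UNIV_I])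
qed

lemma pd_force:
  assumes "finite V" "a \<in> pd_obs_inf V E S" "x \<in> V" "E a x"
    "\<And>y. y \<in> V \<Longrightarrow> E a y \<Longrightarrow> y \<noteq> x \<Longrightarrow> y \<in> pd_obs_inf V E S"
  shows "x \<in> pd_obs_inf V E S"
proof (rule ccontr)
  assume "x \<notin> pd_obs_inf V E S"
  then have "x \<in> forced V E (pd_obs_inf V E S)" unfolding forced_def using assms by auto
  then show False using pd_closed[OF assms(1), of E S] \<open>x \<notin> _\<close> by auto
qed

lemma closed_nbhd_mono: "S \<subseteq> S' \<Longrightarrow> closed_nbhd V E S \<subseteq> closed_nbhd V E S'"
  unfolding closed_nbhd_def by blast

lemma pd_mono:
  assumes "finite V" "S \<subseteq> S'"
  shows "pd_obs_inf V E S \<subseteq> pd_obs_inf V E S'"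
proof (rule pd_least)
  show "closed_nbhd V E S \<subseteq> pd_obs_inf V E S'"
    using nbhd_sub_pd[of V E S'] closed_nbhd_mono[OF assms(2), of V E] by auto
  show "forced V E (pd_obs_inf V E S') \<subseteq> pd_obs_inf V E S'" by (rule pd_closed[OF assms(1)])
qed


definition emb :: "nat \<Rightarrow> nat list option \<Rightarrow> nat list option" where
  "emb i y = (case y of None \<Rightarrow> Some [] | Some ys \<Rightarrow> Some (i # ys))"

lemma emb_simps[simp]: "emb i None = Some []" "emb i (Some ys) = Some (i # ys)"
  by (auto simp: emb_def)

lemma emb_ne_None[simp]: "emb i y \<noteq> None" by (cases y) auto

lemma emb_eq_root[simp]: "emb i y = Some [] \<longleftrightarrow> y = None" by (cases y) auto

lemma emb_eq_sym_simps[simp]: "None = emb i y \<longleftrightarrow> False" "Some [] = emb i y \<longleftrightarrow> y = None"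
  by (cases y; auto)+

lemma emb_eq_Some[simp]: "emb i y = Some (j # ys) \<longleftrightarrow> i = j \<and> y = Some ys"
  "Some (j # ys) = emb i y \<longleftrightarrow> i = j \<and> y = Some ys"
  by (cases y; auto)+

lemma emb_inj: "y \<noteq> None \<Longrightarrow> z \<noteq> None \<Longrightarrow> emb i y = emb j z \<longleftrightarrow> i = j \<and> y = z"
  by (cases y; cases z) auto

lemma emb_inj1: "emb i y = emb i z \<longleftrightarrow> y = z"
  by (cases y; cases z) auto

lemma tverts_Some: "Some xs \<in> tverts m h \<longleftrightarrow> length xs \<le> h \<and> (\<forall>x\<in>set xs. x < m)"
  by (auto simp: tverts_def)

lemma tverts_None[simp]: "None \<in> tverts m h" by (simp add: tverts_def)
lemma tverts_root[simp]: "Some [] \<in> tverts m h" by (simp add: tverts_Some)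

lemma finite_tverts[simp]: "finite (tverts m h)"
proof -
  have "{xs. length xs \<le> h \<and> (\<forall>x\<in>set xs. x < m)} = {xs. set xs \<subseteq> {..<m} \<and> length xs \<le> h}" by auto
  then have "finite {xs. length xs \<le> h \<and> (\<forall>x\<in>set xs. x < m)}"
    using finite_lists_length_le[of "{..<m}" h] by simp
  then show ?thesis unfolding tverts_def by simp
qed

lemma tadj_sym: "tadj m h u v = tadj m h v u"
  unfolding tadj_def by blast

lemma tadj_verts: "tadj m h u v \<Longrightarrow> u \<in> tverts m h \<and> v \<in> tverts m h"
  unfolding tadj_def by blast

lemma tadj_None: "tadj m h None w \<longleftrightarrow> w = Some []"
  unfolding tadj_def by auto

lemma tadj_None2: "tadj m h w None \<longleftrightarrow> w = Some []"
  unfolding tadj_def by auto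

lemma tadj_Some_Some: "tadj m h (Some xs) (Some ys) \<longleftrightarrow> Some xs \<in> tverts m h \<and> Some ys \<in> tverts m h \<and>
   ((\<exists>i. ys = xs @ [i]) \<or> (\<exists>i. xs = ys @ [i]))"
  unfolding tadj_def by auto

lemma tadj_root: "tadj m h (Some []) w \<longleftrightarrow> w = None \<or> (\<exists>i<m. 1 \<le> h \<and> w = Some [i])"
proof (cases w)
  case None then show ?thesis by (simp add: tadj_None2)
next
  case (Some ys)
  then show ?thesis by (auto simp: tadj_Some_Some tverts_Some)
qed

lemma emb_tverts: "1 \<le> h \<Longrightarrow> i < m \<Longrightarrow> emb i y \<in> tverts m h \<longleftrightarrow> y \<in> tverts m (h - 1)"
  by (cases y) (auto simp: tverts_Some)

lemma emb_adj:
  assumes "1 \<le> h" "i < m"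
  shows "tadj m h (emb i y) (emb i z) \<longleftrightarrow> tadj m (h - 1) y z"
proof (cases y)
  case None
  then show ?thesis
  proof (cases z)
    case None then show ?thesis using \<open>y = None\<close> by (auto simp: tadj_Some_Some tadj_None)
  next
    case (Some zs) then show ?thesis using \<open>y = None\<close> assms
      by (auto simp: tadj_Some_Some tadj_None tverts_Some)
  qed
next
  case (Some ys)
  then show ?thesis
  proof (cases z)
    case None then show ?thesis using \<open>y = Some ys\<close> assms
      by (auto simp: tadj_Some_Some tadj_None2 tverts_Some)
  next
    case (Some zs) then show ?thesis using \<open>y = Some ys\<close> assms
      by (auto simp: tadj_Some_Some tverts_Some)
  qed
qed

lemma emb_adj_nb:
  assumes "1 \<le> h" "i < m" "y \<noteq> None" "tadj m h (emb i y) w"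
  shows "\<exists>z\<in>tverts m (h - 1). w = emb i z"
proof -
  obtain ys where ys: "y = Some ys" using assms(3) by auto
  from assms(4) have wv: "w \<in> tverts m h" using tadj_verts by blast
  show ?thesis
  proof (cases w)
    case None then show ?thesis using assms(4) ys by (simp add: tadj_None2)
  next
    case (Some ws)
    then have "(\<exists>j. ws = (i # ys) @ [j]) \<or> (\<exists>j. i # ys = ws @ [j])"
      using assms(4) ys by (simp add: tadj_Some_Some)
    then show ?thesis
    proof
      assume "\<exists>j. ws = (i # ys) @ [j]"
      then obtain j where j: "ws = i # (ys @ [j])" by auto
      have "Some (ys @ [j]) \<in> tverts m (h - 1)" using wv Some j by (auto simp: tverts_Some)
      then show ?thesis using Some j by (intro bexI[of _ "Some (ys @ [j])"]) auto
    next
      assume "\<exists>j. i # ys = ws @ [j]"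
      then obtain j where j: "i # ys = ws @ [j]" by auto
      show ?thesis
      proof (cases ws)
        case Nil then show ?thesis using Some by (intro bexI[of _ None]) auto
      next
        case (Cons a ws')
        then have "a = i" "ys = ws' @ [j]" using j by auto
        have "Some ws' \<in> tverts m (h - 1)" using wv Some Cons by (auto simp: tverts_Some)
        then show ?thesis using Some Cons \<open>a = i\<close> by (intro bexI[of _ "Some ws'"]) auto
      qed
    qed
  qed
qed

lemma tverts_decomp:
  assumes "1 \<le> h" "v \<in> tverts m h"
  shows "v = None \<or> v = Some [] \<or> (\<exists>i<m. \<exists>y\<in>tverts m (h - 1). y \<noteq> None \<and> v = emb i y)"
proof (cases v)
  case (Some xs)
  show ?thesis
  proof (cases xs)
    case (Cons i ys)
    then have "i < m" "Some ys \<in> tverts m (h - 1)" using assms Some by (auto simp: tverts_Some)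
    then show ?thesis using Some Cons by (intro disjI2 exI[of _ i]) (auto intro!: bexI[of _ "Some ys"])
  qed (use Some in auto)
qed auto


abbreviation obs :: "nat \<Rightarrow> nat \<Rightarrow> nat list option set \<Rightarrow> nat list option set" where
  "obs m h S \<equiv> pd_obs_inf (tverts m h) (tadj m h) S"

abbreviation fcl :: "nat \<Rightarrow> nat \<Rightarrow> nat list option set \<Rightarrow> bool" where
  "fcl m h X \<equiv> forced (tverts m h) (tadj m h) X \<subseteq> X"

definition gl :: "nat \<Rightarrow> bool \<Rightarrow> bool \<Rightarrow> (nat \<Rightarrow> nat list option set) \<Rightarrow> nat list option set" where
  "gl m rX r'X Cs = (if r'X then {None} else {}) \<union> (if rX then {Some []} else {}) \<union> (\<Union>i<m. emb i ` (Cs i - {None}))"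

definition sub :: "nat \<Rightarrow> nat list option set \<Rightarrow> nat list option set" where
  "sub i S = {y. y \<noteq> None \<and> emb i y \<in> S}"

lemma gl_None[simp]: "None \<in> gl m rX r'X Cs \<longleftrightarrow> r'X"
  by (auto simp: gl_def)

lemma gl_root[simp]: "Some [] \<in> gl m rX r'X Cs \<longleftrightarrow> rX"
  by (auto simp: gl_def)

lemma gl_emb: "i < m \<Longrightarrow> y \<noteq> None \<Longrightarrow> emb i y \<in> gl m rX r'X Cs \<longleftrightarrow> y \<in> Cs i"
  by (cases y) (auto simp: gl_def image_iff)

lemma gl_cases:
  assumes "v \<in> gl m rX r'X Cs"
  shows "(v = None \<and> r'X) \<or> (v = Some [] \<and> rX) \<or> (\<exists>i<m. \<exists>y. y \<noteq> None \<and> y \<in> Cs i \<and> v = emb i y)"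
proof -
  from assms have "v \<in> (if r'X then {None} else {}) \<or> v \<in> (if rX then {Some []} else {}) \<or>
     (\<exists>i<m. v \<in> emb i ` (Cs i - {None}))" unfolding gl_def by blast
  then show ?thesis
  proof (elim disjE)
    assume "\<exists>i<m. v \<in> emb i ` (Cs i - {None})"
    then obtain i y where "i < m" "y \<in> Cs i" "y \<noteq> None" "v = emb i y" by blast
    then show ?thesis by blast
  qed (auto split: if_splits)
qed

lemma gl_sub:
  assumes "1 \<le> h" "\<And>i. i < m \<Longrightarrow> Cs i \<subseteq> tverts m (h - 1)"
  shows "gl m rX r'X Cs \<subseteq> tverts m h"
proof
  fix v assume "v \<in> gl m rX r'X Cs"
  then consider "v = None" | "v = Some []" | i y where "i < m" "y \<in> Cs i" "v = emb i y"
    using gl_cases by blast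
  then show "v \<in> tverts m h"
  proof cases
    case 3 then show ?thesis using assms(2)[OF 3(1)] emb_tverts[OF assms(1) 3(1)] by auto
  qed auto
qed

lemma full_of:
  assumes "1 \<le> h" "None \<in> X" "Some [] \<in> X"
    "\<And>i y. i < m \<Longrightarrow> y \<in> tverts m (h - 1) \<Longrightarrow> y \<noteq> None \<Longrightarrow> emb i y \<in> X"
  shows "tverts m h \<subseteq> X"
  using tverts_decomp[OF assms(1)] assms by blast

lemma gl_full: "1 \<le> h \<Longrightarrow> gl m True True (\<lambda>i. tverts m (h - 1)) = tverts m h"
  apply (rule antisym)
   apply (rule gl_sub; simp)
  apply (rule full_of; simp add: gl_emb)
  done

lemma decomp:
  assumes "1 \<le> h" "S \<subseteq> tverts m h - {None}"
  shows "S = gl m (Some [] \<in> S) False (\<lambda>i. sub i S)"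
proof (rule set_eqI)
  fix v show "v \<in> S \<longleftrightarrow> v \<in> gl m (Some [] \<in> S) False (\<lambda>i. sub i S)"
  proof
    assume "v \<in> S"
    then have "v \<in> tverts m h" "v \<noteq> None" using assms by auto
    then consider "v = Some []" | i y where "i < m" "y \<noteq> None" "v = emb i y"
      using tverts_decomp[OF assms(1)] by blast
    then show "v \<in> gl m (Some [] \<in> S) False (\<lambda>i. sub i S)"
    proof cases
      case 1 then show ?thesis using \<open>v \<in> S\<close> by simp
    next
      case 2 then show ?thesis using \<open>v \<in> S\<close> by (simp add: gl_emb sub_def)
    qed
  qed (auto simp: gl_def sub_def split: if_splits)
qed

lemma sub_sub: "S \<subseteq> tverts m h - {None} \<Longrightarrow> 1 \<le> h \<Longrightarrow> i < m \<Longrightarrow> sub i S \<subseteq> tverts m (h - 1) - {None}"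
proof
  fix y assume a: "S \<subseteq> tverts m h - {None}" "1 \<le> h" "i < m" "y \<in> sub i S"
  then have "y \<noteq> None" "emb i y \<in> tverts m h" by (auto simp: sub_def)
  then show "y \<in> tverts m (h - 1) - {None}" using emb_tverts[OF a(2,3)] by simp
qed

definition Yset :: "nat \<Rightarrow> nat \<Rightarrow> nat list option set \<Rightarrow> nat \<Rightarrow> nat list option set" where
  "Yset m h P i = {y \<in> tverts m (h - 1). if y = None then Some [] \<in> P \<and> Some [i] \<in> P else emb i y \<in> P}"

lemma sim_closed:
  assumes h: "1 \<le> h" and i: "i < m" and cl: "fcl m h P"
  shows "fcl m (h - 1) (Yset m h P i)"
proof
  fix x assume "x \<in> forced (tverts m (h - 1)) (tadj m (h - 1)) (Yset m h P i)"
  then obtain a where xV: "x \<in> tverts m (h - 1)" and aY: "a \<in> Yset m h P i" and xY: "x \<notin> Yset m h P i"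
    and ax: "tadj m (h - 1) a x"
    and oth: "\<And>y. y \<in> tverts m (h - 1) \<Longrightarrow> tadj m (h - 1) a y \<Longrightarrow> y \<notin> Yset m h P i \<Longrightarrow> y = x"
    unfolding forced_def by blast
  have aV: "a \<in> tverts m (h - 1)" using aY by (simp add: Yset_def)
  show "x \<in> Yset m h P i"
  proof (cases "a = None")
    case True
    then have "x = Some []" using ax by (simp add: tadj_None)
    moreover have "Some [i] \<in> P" using aY True by (simp add: Yset_def)
    ultimately show ?thesis using xV by (simp add: Yset_def)
  next
    case aN: False
    have eaP: "emb i a \<in> P" using aY aN by (simp add: Yset_def)
    have bigadj: "tadj m h (emb i a) (emb i x)" using emb_adj[OF h i] ax by simp
    have exV: "emb i x \<in> tverts m h" using emb_tverts[OF h i] xV by simp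
    have others: "w \<in> P" if w: "w \<in> tverts m h" "tadj m h (emb i a) w" "w \<noteq> emb i x" for w
    proof -
      obtain z where z: "z \<in> tverts m (h - 1)" "w = emb i z" using emb_adj_nb[OF h i aN w(2)] by blast
      have za: "tadj m (h - 1) a z" using w(2) z emb_adj[OF h i] by simp
      have "z \<noteq> x" using w(3) z by auto
      then have "z \<in> Yset m h P i" using oth[OF z(1) za] by blast
      then show "w \<in> P" using z by (cases "z = None") (auto simp: Yset_def)
    qed
    have exP: "emb i x \<in> P"
    proof (rule ccontr)
      assume "emb i x \<notin> P"
      then have "emb i x \<in> forced (tverts m h) (tadj m h) P"
        unfolding forced_def using eaP bigadj exV others by blast
      then show False using cl \<open>emb i x \<notin> P\<close> by blast
    qed
    show ?thesis
    proof (cases "x = None")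
      case False then show ?thesis using exP xV by (cases x) (auto simp: Yset_def)
    next
      case True
      then have "a = Some []" using ax by (simp add: tadj_None2)
      then show ?thesis using exP eaP True xV by (simp add: Yset_def)
    qed
  qed
qed

lemma sim_lb:
  assumes h: "1 \<le> h" and i: "i < m" and S: "S \<subseteq> tverts m h"
  shows "obs m (h - 1) (sub i S) \<subseteq> Yset m h (obs m h S) i"
proof (rule pd_least)
  let ?P = "obs m h S"
  show "fcl m (h - 1) (Yset m h ?P i)" by (rule sim_closed[OF h i pd_closed]) simp
  have NP: "closed_nbhd (tverts m h) (tadj m h) S \<subseteq> ?P" by (rule nbhd_sub_pd)
  show "closed_nbhd (tverts m (h - 1)) (tadj m (h - 1)) (sub i S) \<subseteq> Yset m h ?P i"
  proof
    fix v assume "v \<in> closed_nbhd (tverts m (h - 1)) (tadj m (h - 1)) (sub i S)"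
    then consider (a) "v \<in> sub i S" | (b) t where "t \<in> sub i S" "v \<in> tverts m (h - 1)" "tadj m (h - 1) t v"
      unfolding closed_nbhd_def by blast
    then show "v \<in> Yset m h ?P i"
    proof cases
      case a
      then have "v \<noteq> None" "emb i v \<in> S" by (auto simp: sub_def)
      moreover have "emb i v \<in> tverts m h" using \<open>emb i v \<in> S\<close> S by blast
      then have "v \<in> tverts m (h - 1)" using emb_tverts[OF h i] by simp
      moreover have "emb i v \<in> ?P" using \<open>emb i v \<in> S\<close> by (rule in_pd)
      ultimately show ?thesis by (cases v) (auto simp: Yset_def)
    next
      case b
      have tS: "emb i t \<in> S" "t \<noteq> None" using b(1) unfolding sub_def by blast+
      have adj: "tadj m h (emb i t) (emb i v)" using emb_adj[OF h i] b(3) by simp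
      have evV: "emb i v \<in> tverts m h" using emb_tverts[OF h i] b(2) by simp
      have evP: "emb i v \<in> ?P" by (rule nbr_in_pd[of "emb i t" S "emb i v" "tverts m h" "tadj m h"]) (use tS evV adj in auto)
      show ?thesis
      proof (cases "v = None")
        case True
        then have "t = Some []" using b(3) by (simp add: tadj_None2)
        then have "Some [i] \<in> S" using tS by simp
        then have "Some [i] \<in> ?P" by (rule in_pd)
        then show ?thesis using True evP b(2) by (simp add: Yset_def)
      qed (use evP b(2) in \<open>auto simp: Yset_def\<close>)
    qed
  qed
qed

lemma sim_lb2:
  assumes h: "1 \<le> h" and i: "i < m" and S: "S \<subseteq> tverts m h"
    and r: "Some [] \<in> obs m h S" "Some [i] \<in> obs m h S"
  shows "obs m (h - 1) (insert None (sub i S)) \<subseteq> Yset m h (obs m h S) i"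
proof (rule pd_least)
  let ?P = "obs m h S"
  show "fcl m (h - 1) (Yset m h ?P i)" by (rule sim_closed[OF h i pd_closed]) simp
  have A: "closed_nbhd (tverts m (h - 1)) (tadj m (h - 1)) (sub i S) \<subseteq> Yset m h ?P i"
    using sim_lb[OF assms(1-3)] nbhd_sub_pd[of "tverts m (h - 1)" "tadj m (h - 1)" "sub i S"] by blast
  have B: "closed_nbhd (tverts m (h - 1)) (tadj m (h - 1)) {None} \<subseteq> Yset m h ?P i"
    using r by (auto simp: closed_nbhd_def Yset_def tadj_None)
  have "closed_nbhd (tverts m (h - 1)) (tadj m (h - 1)) (insert None (sub i S)) =
     closed_nbhd (tverts m (h - 1)) (tadj m (h - 1)) {None} \<union> closed_nbhd (tverts m (h - 1)) (tadj m (h - 1)) (sub i S)"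
    unfolding closed_nbhd_def by blast
  then show "closed_nbhd (tverts m (h - 1)) (tadj m (h - 1)) (insert None (sub i S)) \<subseteq> Yset m h ?P i"
    using A B by simp
qed

definition wclosed :: "nat list option set \<Rightarrow> (nat list option \<Rightarrow> nat list option \<Rightarrow> bool) \<Rightarrow> nat list option set \<Rightarrow> bool" where
  "wclosed V E C \<longleftrightarrow> (\<forall>a x. a \<in> C \<longrightarrow> a \<noteq> None \<longrightarrow> x \<in> V \<longrightarrow> x \<notin> C \<longrightarrow> E a x \<longrightarrow> (\<exists>y\<in>V. E a y \<and> y \<notin> C \<and> y \<noteq> x))"

lemma wclosed_of_closed: "forced V E C \<subseteq> C \<Longrightarrow> wclosed V E C"
  unfolding wclosed_def forced_def by blast

lemma wclosed_ins:
  assumes "fcl m k D" "Some [] \<notin> D"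
  shows "wclosed (tverts m k) (tadj m k) (D \<union> {None})"
  unfolding wclosed_def
proof (intro allI impI)
  fix a x assume a: "a \<in> D \<union> {None}" "a \<noteq> None" and x: "x \<in> tverts m k" "x \<notin> D \<union> {None}" "tadj m k a x"
  have aD: "a \<in> D" "a \<noteq> Some []" using a assms(2) by auto
  show "\<exists>y\<in>tverts m k. tadj m k a y \<and> y \<notin> D \<union> {None} \<and> y \<noteq> x"
  proof (rule ccontr)
    assume "\<not> ?thesis"
    then have "\<forall>y\<in>tverts m k. tadj m k a y \<and> y \<notin> D \<longrightarrow> y = x"
      using aD(2) by (auto simp: tadj_None2)
    then have "x \<in> forced (tverts m k) (tadj m k) D" unfolding forced_def using aD x by blast
    then show False using assms(1) x by blast
  qed
qed

lemma glue_closed: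
  assumes h: "1 \<le> h" and Cs: "\<And>i. i < m \<Longrightarrow> Cs i \<subseteq> tverts m (h - 1)"
    and r'r: "r'X \<Longrightarrow> rX"
    and rnb: "rX \<Longrightarrow> \<forall>x\<in>tverts m h. tadj m h (Some []) x \<longrightarrow> x \<notin> gl m rX r'X Cs \<longrightarrow>
              (\<exists>y\<in>tverts m h. tadj m h (Some []) y \<and> y \<notin> gl m rX r'X Cs \<and> y \<noteq> x)"
    and wc: "\<And>i. i < m \<Longrightarrow> wclosed (tverts m (h - 1)) (tadj m (h - 1)) ((Cs i - {None}) \<union> (if rX then {None} else {}))"
  shows "fcl m h (gl m rX r'X Cs)"
proof
  let ?X = "gl m rX r'X Cs"
  fix x assume "x \<in> forced (tverts m h) (tadj m h) ?X"
  then obtain a where xV: "x \<in> tverts m h" and aX: "a \<in> ?X" and xX: "x \<notin> ?X"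
    and ax: "tadj m h a x"
    and oth: "\<And>y. y \<in> tverts m h \<Longrightarrow> tadj m h a y \<Longrightarrow> y \<notin> ?X \<Longrightarrow> y = x"
    unfolding forced_def by blast
  have aV: "a \<in> tverts m h" using ax tadj_verts by blast
  show "x \<in> ?X"
  proof (cases "a = None")
    case True
    then have "x = Some []" using ax by (simp add: tadj_None)
    moreover have "r'X" using aX True by simp
    ultimately show ?thesis using r'r by simp
  next
    case aN: False
    show ?thesis
    proof (cases "a = Some []")
      case True
      then have "rX" using aX by simp
      then show ?thesis using rnb True xV ax xX oth by blast
    next
      case False
      then obtain i y where i: "i < m" and y: "y \<in> tverts m (h - 1)" "y \<noteq> None" and a: "a = emb i y"
        using tverts_decomp[OF h aV] aN by blast
      let ?C = "(Cs i - {None}) \<union> (if rX then {None} else {})"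
      have memC: "z \<in> ?C \<longleftrightarrow> emb i z \<in> ?X" if "z \<in> tverts m (h - 1)" for z
        using i by (cases "z = None") (auto simp: gl_emb)
      obtain z where z: "z \<in> tverts m (h - 1)" "x = emb i z" using emb_adj_nb[OF h i y(2)] ax a by blast
      have yC: "y \<in> ?C" using memC[OF y(1)] aX a by simp
      have zC: "z \<notin> ?C" using memC[OF z(1)] xX z by simp
      have yz: "tadj m (h - 1) y z" using ax a z emb_adj[OF h i] by simp
      obtain w where w: "w \<in> tverts m (h - 1)" "tadj m (h - 1) y w" "w \<notin> ?C" "w \<noteq> z"
        using wc[OF i] yC y(2) z(1) zC yz unfolding wclosed_def by blast
      have "emb i w \<in> tverts m h" using emb_tverts[OF h i] w(1) by simp
      moreover have "tadj m h a (emb i w)" using a w(2) emb_adj[OF h i] by simp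
      moreover have "emb i w \<notin> ?X" using memC[OF w(1)] w(3) by simp
      ultimately have "emb i w = x" using oth by blast
      then have "w = z" using z emb_inj1 by simp
      then show ?thesis using w(4) by simp
    qed
  qed
qed

lemma glue_nbhd:
  assumes h: "1 \<le> h"
    and rb: "b \<Longrightarrow> rX \<and> r'X \<and> (\<forall>i<m. Some [] \<in> Cs i)"
    and r'b: "r'b \<Longrightarrow> rX \<and> r'X"
    and sub: "\<And>i. i < m \<Longrightarrow> closed_nbhd (tverts m (h - 1)) (tadj m (h - 1)) (Ss i - {None}) \<subseteq>
                 (Cs i - {None}) \<union> (if rX then {None} else {})"
  shows "closed_nbhd (tverts m h) (tadj m h) (gl m b r'b Ss) \<subseteq> gl m rX r'X Cs"
proof
  let ?X = "gl m rX r'X Cs"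
  fix v assume "v \<in> closed_nbhd (tverts m h) (tadj m h) (gl m b r'b Ss)"
  then obtain s where s: "s \<in> gl m b r'b Ss" and sv: "s = v \<or> tadj m h s v"
    unfolding closed_nbhd_def by blast
  show "v \<in> ?X"
  proof (cases "s = None")
    case True
    then have "r'b" using s by simp
    then show ?thesis using sv True r'b by (auto simp: tadj_None)
  next
    case sN: False
    show ?thesis
    proof (cases "s = Some []")
      case True
      then have "b" using s by simp
      then have rr: "rX" "r'X" "\<And>i. i < m \<Longrightarrow> Some [] \<in> Cs i" using rb by auto
      from sv True consider "v = Some []" | "v = None" | j where "j < m" "v = emb j (Some [])"
        by (auto simp: tadj_root)
      then show ?thesis
      proof cases
        case 3 then show ?thesis using rr(3)[OF 3(1)] gl_emb[OF 3(1), of "Some []"] by simp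
      qed (use rr in auto)
    next
      case False
      then obtain i t where i: "i < m" and t: "t \<noteq> None" "s = emb i t" "t \<in> Ss i"
        using gl_cases[OF s] sN by blast
      have tV: "t \<in> tverts m (h - 1)" if "s \<in> tverts m h" using that emb_tverts[OF h i] t by simp
      from sv show ?thesis
      proof
        assume "s = v"
        have "t \<in> closed_nbhd (tverts m (h - 1)) (tadj m (h - 1)) (Ss i - {None})"
          using t unfolding closed_nbhd_def by blast
        then have "t \<in> (Cs i - {None}) \<union> (if rX then {None} else {})" using sub[OF i] by blast
        then have "t \<in> Cs i" using t(1) by (auto split: if_splits)
        then show ?thesis using \<open>s = v\<close> t gl_emb[OF i t(1)] by simp
      next
        assume adj: "tadj m h s v"
        obtain z where z: "z \<in> tverts m (h - 1)" "v = emb i z" using emb_adj_nb[OF h i t(1)] adj t by blast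
        have "tadj m (h - 1) t z" using adj t z emb_adj[OF h i] by simp
        then have "z \<in> closed_nbhd (tverts m (h - 1)) (tadj m (h - 1)) (Ss i - {None})"
          using t z unfolding closed_nbhd_def by blast
        then have "z \<in> (Cs i - {None}) \<union> (if rX then {None} else {})" using sub[OF i] by blast
        then show ?thesis using z i by (cases "z = None") (auto simp: gl_emb split: if_splits)
      qed
    qed
  qed
qed


lemma typeI_iff: "typeI m h S \<longleftrightarrow> S \<subseteq> tverts m h - {None} \<and> obs m h S = tverts m h"
  unfolding typeI_def power_dominating_def by blast

lemma typeII_iff: "typeII m h S \<longleftrightarrow> S \<subseteq> tverts m h - {None} \<and> obs m h S \<noteq> tverts m h
   \<and> obs m h (insert None S) = tverts m h"
  unfolding typeII_def power_dominating_def by auto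

lemma Y_root: "None \<in> Yset m h P i \<Longrightarrow> Some [] \<in> P \<and> Some [i] \<in> P"
  by (simp add: Yset_def)

lemma Y_emb: "y \<in> Yset m h P i \<Longrightarrow> y \<noteq> None \<Longrightarrow> emb i y \<in> P"
  by (simp add: Yset_def)

lemma Y_child: "Some [] \<in> Yset m h P i \<Longrightarrow> Some [i] \<in> P"
  using Y_emb[of "Some []" m h P i] by simp

lemma obs_sub: "T \<subseteq> tverts m k \<Longrightarrow> obs m k T \<subseteq> tverts m k"
  by (rule pd_sub)

lemma force_r':
  assumes "Some [] \<in> obs m h T" "\<And>j. j < m \<Longrightarrow> 1 \<le> h \<Longrightarrow> Some [j] \<in> obs m h T"
  shows "None \<in> obs m h T"
proof (rule pd_force[where a = "Some []"])
  show "finite (tverts m h)" by simp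
  show "Some [] \<in> obs m h T" by fact
  show "None \<in> tverts m h" by simp
  show "tadj m h (Some []) None" by (simp add: tadj_root)
  fix y assume "y \<in> tverts m h" "tadj m h (Some []) y" "y \<noteq> None"
  then show "y \<in> obs m h T" using assms(2) by (auto simp: tadj_root)
qed

lemma force_ri:
  assumes h: "1 \<le> h" and i: "i < m" and "Some [] \<in> obs m h T" "None \<in> obs m h T"
    "\<And>j. j < m \<Longrightarrow> j \<noteq> i \<Longrightarrow> Some [j] \<in> obs m h T"
  shows "Some [i] \<in> obs m h T"
proof (rule pd_force[where a = "Some []"])
  show "finite (tverts m h)" by simp
  show "Some [] \<in> obs m h T" by fact
  show "Some [i] \<in> tverts m h" using h i by (simp add: tverts_Some)
  show "tadj m h (Some []) (Some [i])" using h i by (simp add: tadj_root)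
  fix y assume "y \<in> tverts m h" "tadj m h (Some []) y" "y \<noteq> Some [i]"
  then show "y \<in> obs m h T" using assms(4,5) by (auto simp: tadj_root)
qed

lemma full_obs:
  assumes h: "1 \<le> h" and T: "T \<subseteq> tverts m h" and "None \<in> obs m h T" "Some [] \<in> obs m h T"
    and Y: "\<And>i. i < m \<Longrightarrow> tverts m (h - 1) \<subseteq> Yset m h (obs m h T) i"
  shows "obs m h T = tverts m h"
proof (rule antisym)
  show "obs m h T \<subseteq> tverts m h" using T by (rule obs_sub)
  show "tverts m h \<subseteq> obs m h T"
  proof (rule full_of[OF h assms(3,4)])
    fix i y assume "i < m" "y \<in> tverts m (h - 1)" "y \<noteq> None"
    then show "emb i y \<in> obs m h T" using Y Y_emb by blast
  qed
qed

lemma cn_sub: "T \<subseteq> tverts m k \<Longrightarrow> closed_nbhd (tverts m k) (tadj m k) T \<subseteq> tverts m k"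
  unfolding closed_nbhd_def by blast

lemma cn_obs: "closed_nbhd (tverts m k) (tadj m k) T \<subseteq> obs m k T"
  by (rule nbhd_sub_pd)

lemma fcl_V: "fcl m k (tverts m k)"
  by (rule forced_sub)

lemma fcl_obs: "fcl m k (obs m k T)"
  by (rule pd_closed) simp

lemma ub:
  assumes h: "1 \<le> h" and Cs: "\<And>i. i < m \<Longrightarrow> Cs i \<subseteq> tverts m (h - 1)"
    and r'r: "r'X \<Longrightarrow> rX"
    and rnb: "rX \<Longrightarrow> \<forall>x\<in>tverts m h. tadj m h (Some []) x \<longrightarrow> x \<notin> gl m rX r'X Cs \<longrightarrow>
              (\<exists>y\<in>tverts m h. tadj m h (Some []) y \<and> y \<notin> gl m rX r'X Cs \<and> y \<noteq> x)"
    and wc: "\<And>i. i < m \<Longrightarrow> wclosed (tverts m (h - 1)) (tadj m (h - 1)) ((Cs i - {None}) \<union> (if rX then {None} else {}))"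
    and rb: "b \<Longrightarrow> rX \<and> r'X \<and> (\<forall>i<m. Some [] \<in> Cs i)"
    and r'b: "r'b \<Longrightarrow> rX \<and> r'X"
    and sub: "\<And>i. i < m \<Longrightarrow> closed_nbhd (tverts m (h - 1)) (tadj m (h - 1)) (Ss i - {None}) \<subseteq>
                 (Cs i - {None}) \<union> (if rX then {None} else {})"
  shows "obs m h (gl m b r'b Ss) \<subseteq> gl m rX r'X Cs"
  by (rule pd_least[OF glue_nbhd[OF h rb r'b sub] glue_closed[OF h Cs r'r rnb wc]])

lemma rnb_all:
  assumes "r'X" "\<And>j. j < m \<Longrightarrow> Some [] \<in> Cs j"
  shows "\<forall>x\<in>tverts m h. tadj m h (Some []) x \<longrightarrow> x \<notin> gl m rX r'X Cs \<longrightarrow>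
              (\<exists>y\<in>tverts m h. tadj m h (Some []) y \<and> y \<notin> gl m rX r'X Cs \<and> y \<noteq> x)"
proof (intro ballI impI)
  fix x assume "x \<in> tverts m h" "tadj m h (Some []) x" "x \<notin> gl m rX r'X Cs"
  then consider "x = None" | j where "j < m" "x = emb j (Some [])"
    by (auto simp: tadj_root)
  then have False
  proof cases
    case 1 then show False using assms(1) \<open>x \<notin> _\<close> by simp
  next
    case 2 then show False using assms(2)[OF 2(1)] \<open>x \<notin> _\<close> gl_emb[OF 2(1), of "Some []"] by simp
  qed
  then show "\<exists>y\<in>tverts m h. tadj m h (Some []) y \<and> y \<notin> gl m rX r'X Cs \<and> y \<noteq> x" ..
qed

lemma rnb_two:
  assumes "x1 \<noteq> x2" "x1 \<in> tverts m h" "x2 \<in> tverts m h" "tadj m h (Some []) x1" "tadj m h (Some []) x2"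
    "x1 \<notin> gl m rX r'X Cs" "x2 \<notin> gl m rX r'X Cs"
  shows "\<forall>x\<in>tverts m h. tadj m h (Some []) x \<longrightarrow> x \<notin> gl m rX r'X Cs \<longrightarrow>
              (\<exists>y\<in>tverts m h. tadj m h (Some []) y \<and> y \<notin> gl m rX r'X Cs \<and> y \<noteq> x)"
  using assms by metis

lemma child_adj: "1 \<le> h \<Longrightarrow> i < m \<Longrightarrow> Some [i] \<in> tverts m h \<and> tadj m h (Some []) (Some [i])"
  by (simp add: tadj_root tverts_Some)

lemma child_emb: "Some [i] = emb i (Some [])" by simp

lemma child_gl: "i < m \<Longrightarrow> Some [i] \<in> gl m rX r'X Cs \<longleftrightarrow> Some [] \<in> Cs i"
  using gl_emb[of i m "Some []"] by simp

lemma base_inv: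
  assumes "typeII m 0 T"
  shows "None \<notin> obs m 0 T \<and> Some [] \<notin> obs m 0 T"
proof -
  have T: "T \<subseteq> tverts m 0 - {None}" "obs m 0 T \<noteq> tverts m 0" using assms by (auto simp: typeII_iff)
  have V0: "tverts m 0 = {None, Some []}" by (auto simp: tverts_def)
  have "T = {} \<or> T = {Some []}" using T(1) V0 by auto
  moreover have "obs m 0 {Some []} = tverts m 0"
  proof (rule antisym)
    show "obs m 0 {Some []} \<subseteq> tverts m 0" by (rule obs_sub) simp
    have "None \<in> obs m 0 {Some []}" by (rule nbr_in_pd) (auto simp: tadj_root)
    moreover have "Some [] \<in> obs m 0 {Some []}" by (rule in_pd) simp
    ultimately show "tverts m 0 \<subseteq> obs m 0 {Some []}" using V0 by auto
  qed
  moreover have "obs m 0 {} = {}"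
  proof -
    have "obs m 0 {} \<subseteq> {}" by (rule pd_least) (auto simp: closed_nbhd_def forced_def)
    then show ?thesis by blast
  qed
  ultimately show ?thesis using T(2) by auto
qed


context
  fixes m h :: nat and S :: "nat list option set"
  assumes h: "1 \<le> h" and m2: "2 \<le> m" and S: "S \<subseteq> tverts m h - {None}"
begin

lemma SV: "S \<subseteq> tverts m h" using S by blast
lemma SNV: "insert None S \<subseteq> tverts m h" using S by auto

lemma Sgl: "S = gl m (Some [] \<in> S) False (\<lambda>i. sub i S)"
  by (rule decomp[OF h S])

lemma SNgl: "insert None S = gl m (Some [] \<in> S) True (\<lambda>i. sub i S)"
proof -
  have "insert None (gl m (Some [] \<in> S) False (\<lambda>i. sub i S)) = gl m (Some [] \<in> S) True (\<lambda>i. sub i S)"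
    unfolding gl_def by auto
  then show ?thesis using Sgl by simp
qed

lemma subN: "sub i (insert None S) = sub i S"
  by (simp add: sub_def)

lemma subV: "i < m \<Longrightarrow> sub i S \<subseteq> tverts m (h - 1) - {None}"
  by (rule sub_sub[OF S h])

lemma subV': "i < m \<Longrightarrow> sub i S \<subseteq> tverts m (h - 1)"
  by (rule subset_trans[OF subV]) auto

lemma subVN: "i < m \<Longrightarrow> insert None (sub i S) \<subseteq> tverts m (h - 1)"
  using subV'[of i] by simp

lemma AB: "obs m h S \<subseteq> obs m h (insert None S)"
  by (rule pd_mono) auto

lemma simA: "i < m \<Longrightarrow> obs m (h - 1) (sub i S) \<subseteq> Yset m h (obs m h S) i"
  by (rule sim_lb[OF h _ SV])

lemma simB: "i < m \<Longrightarrow> obs m (h - 1) (sub i S) \<subseteq> Yset m h (obs m h (insert None S)) i"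
  using sim_lb[OF h _ SNV, of i] subN by simp

lemma simA2: "i < m \<Longrightarrow> Some [] \<in> obs m h S \<Longrightarrow> Some [i] \<in> obs m h S \<Longrightarrow>
   obs m (h - 1) (insert None (sub i S)) \<subseteq> Yset m h (obs m h S) i"
  by (rule sim_lb2[OF h _ SV])

lemma simB2: "i < m \<Longrightarrow> Some [] \<in> obs m h (insert None S) \<Longrightarrow> Some [i] \<in> obs m h (insert None S) \<Longrightarrow>
   obs m (h - 1) (insert None (sub i S)) \<subseteq> Yset m h (obs m h (insert None S)) i"
  using sim_lb2[OF h _ SNV, of i] subN by simp

lemma rootB: "Some [] \<in> obs m h (insert None S)"
  by (rule nbr_in_pd[of None]) (auto simp: tadj_None)

lemma NoneB: "None \<in> obs m h (insert None S)"
  by (rule in_pd) simp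

lemma sub_minus: "sub i T - {None} = sub i T"
  by (auto simp: sub_def)

lemma cn_sub_child: "i < m \<Longrightarrow> closed_nbhd (tverts m (h - 1)) (tadj m (h - 1)) (sub i S - {None}) \<subseteq> obs m (h - 1) (sub i S)"
  unfolding sub_minus by (rule cn_obs)

lemma cn_sub_childV: "i < m \<Longrightarrow> closed_nbhd (tverts m (h - 1)) (tadj m (h - 1)) (sub i S - {None}) \<subseteq> tverts m (h - 1)"
  unfolding sub_minus using cn_sub[of "sub i S" m "h - 1"] subV' by blast

lemma cn_sub_childB: "i < m \<Longrightarrow> closed_nbhd (tverts m (h - 1)) (tadj m (h - 1)) (sub i S - {None}) \<subseteq> obs m (h - 1) (insert None (sub i S))"
  using cn_sub_child pd_mono[of "tverts m (h - 1)" "sub i S" "insert None (sub i S)" "tadj m (h - 1)"] by auto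

lemma K0:
  assumes i: "i < m" and Bi: "obs m (h - 1) (insert None (sub i S)) \<noteq> tverts m (h - 1)"
  shows "obs m h (insert None S) \<noteq> tverts m h"
proof -
  define Cs where "Cs = (\<lambda>j. if j = i then obs m (h - 1) (insert None (sub i S)) else tverts m (h - 1))"
  have CsV: "Cs j \<subseteq> tverts m (h - 1)" if "j < m" for j
    unfolding Cs_def using obs_sub[OF subVN[OF i]] by auto
  have NCs: "None \<in> Cs j" for j unfolding Cs_def using in_pd[of None "insert None (sub i S)"] by auto
  have RCs: "Some [] \<in> Cs j" for j
    unfolding Cs_def using nbr_in_pd[of None "insert None (sub i S)" "Some []" "tverts m (h - 1)" "tadj m (h - 1)"]
    by (auto simp: tadj_None)
  have CsC: "(Cs j - {None}) \<union> (if True then {None} else {}) = Cs j" for j using NCs by auto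
  have "obs m h (gl m (Some [] \<in> S) True (\<lambda>i. sub i S)) \<subseteq> gl m True True Cs"
  proof (rule ub[OF h CsV])
    show "\<forall>x\<in>tverts m h. tadj m h (Some []) x \<longrightarrow> x \<notin> gl m True True Cs \<longrightarrow>
              (\<exists>y\<in>tverts m h. tadj m h (Some []) y \<and> y \<notin> gl m True True Cs \<and> y \<noteq> x)"
      by (rule rnb_all) (use RCs in auto)
    fix j assume j: "j < m"
    show "wclosed (tverts m (h - 1)) (tadj m (h - 1)) ((Cs j - {None}) \<union> (if True then {None} else {}))"
      unfolding CsC by (rule wclosed_of_closed) (auto simp: Cs_def fcl_V fcl_obs)
    show "closed_nbhd (tverts m (h - 1)) (tadj m (h - 1)) (sub j S - {None}) \<subseteq> (Cs j - {None}) \<union> (if True then {None} else {})"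
      unfolding CsC Cs_def using cn_sub_childB[OF j] cn_sub_childV[OF j] by auto
  qed (use RCs in auto)
  then have sub: "obs m h (insert None S) \<subseteq> gl m True True Cs" using SNgl by simp
  obtain y where y: "y \<in> tverts m (h - 1)" "y \<notin> obs m (h - 1) (insert None (sub i S))"
    using Bi obs_sub[OF subVN[OF i]] by blast
  have "y \<noteq> None" using y(2) in_pd[of None "insert None (sub i S)" "tverts m (h - 1)" "tadj m (h - 1)"] by (cases y) auto
  then have "emb i y \<notin> gl m True True Cs" using y gl_emb[OF i] by (simp add: Cs_def)
  moreover have "emb i y \<in> tverts m h" using emb_tverts[OF h i] y(1) by simp
  ultimately show ?thesis using sub by blast
qed

lemma childII:
  assumes i: "i < m" "obs m (h - 1) (sub i S) \<noteq> tverts m (h - 1)" "obs m (h - 1) (insert None (sub i S)) = tverts m (h - 1)"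
  shows "typeII m (h - 1) (sub i S)"
  using assms subV[OF i(1)] by (simp add: typeII_iff)

lemma typeI_child_root:
  assumes i: "i < m" and Ai: "obs m (h - 1) (sub i S) = tverts m (h - 1)"
  shows "Some [] \<in> obs m h S" "Some [i] \<in> obs m h S" "tverts m (h - 1) \<subseteq> Yset m h (obs m h S) i"
proof -
  show Y: "tverts m (h - 1) \<subseteq> Yset m h (obs m h S) i" using simA[OF i] Ai by simp
  show "Some [] \<in> obs m h S" using subsetD[OF Y tverts_None] Y_root[of m h "obs m h S" i] by blast
  show "Some [i] \<in> obs m h S" using subsetD[OF Y tverts_root] Y_child[of m h "obs m h S" i] by blast
qed

lemma K1:
  assumes b: "Some [] \<in> S" and allB: "\<And>i. i < m \<Longrightarrow> obs m (h - 1) (insert None (sub i S)) = tverts m (h - 1)"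
  shows "obs m h S = tverts m h"
proof -
  have r: "Some [] \<in> obs m h S" using b by (rule in_pd)
  have N: "None \<in> obs m h S" by (rule nbr_in_pd[OF b]) (auto simp: tadj_root)
  have c: "Some [i] \<in> obs m h S" if "i < m" for i
    by (rule nbr_in_pd[OF b]) (use child_adj[OF h that] in auto)
  show ?thesis
  proof (rule full_obs[OF h SV N r])
    fix i assume i: "i < m"
    show "tverts m (h - 1) \<subseteq> Yset m h (obs m h S) i" using simA2[OF i r c[OF i]] allB[OF i] by simp
  qed
qed

lemma K2a:
  assumes allA: "\<And>i. i < m \<Longrightarrow> obs m (h - 1) (sub i S) = tverts m (h - 1)"
  shows "obs m h S = tverts m h"
proof -
  have m0: "0 < m" using m2 by simp
  have r: "Some [] \<in> obs m h S" using typeI_child_root(1)[OF m0 allA[OF m0]] .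
  have N: "None \<in> obs m h S"
    by (rule force_r'[OF r]) (use typeI_child_root(2) allA in blast)
  show ?thesis
    by (rule full_obs[OF h SV N r]) (use typeI_child_root(3) allA in blast)
qed

lemma other_idx: "i < m \<Longrightarrow> \<exists>j<m. j \<noteq> i"
proof (cases "i = 0")
  case True then show ?thesis using m2 by (intro exI[of _ 1]) simp
next
  case False then show ?thesis using m2 by (intro exI[of _ 0]) simp
qed

lemma K2ob:
  assumes odd: "odd h" and b: "Some [] \<notin> S"
    and allB: "\<And>i. i < m \<Longrightarrow> obs m (h - 1) (insert None (sub i S)) = tverts m (h - 1)"
    and inv: "\<And>T. typeII m (h - 1) T \<Longrightarrow> None \<notin> obs m (h - 1) T \<and> (Some [] \<in> obs m (h - 1) T \<longleftrightarrow> odd (h - 1))"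
    and i: "i < m" and Ai: "obs m (h - 1) (sub i S) \<noteq> tverts m (h - 1)"
    and oth: "\<And>j. j < m \<Longrightarrow> j \<noteq> i \<Longrightarrow> obs m (h - 1) (sub j S) = tverts m (h - 1)"
  shows "obs m h (insert None S) = tverts m h" "None \<notin> obs m h S" "Some [] \<in> obs m h S"
     "Some [i] \<notin> obs m h S" "\<And>j. j < m \<Longrightarrow> j \<noteq> i \<Longrightarrow> Some [j] \<in> obs m h S"
proof -
  have tII: "typeII m (h - 1) (sub i S)" by (rule childII[OF i Ai allB[OF i]])
  have NAi: "None \<notin> obs m (h - 1) (sub i S)" and RAi: "Some [] \<notin> obs m (h - 1) (sub i S)"
    using inv[OF tII] odd by auto
  define Cs where "Cs = (\<lambda>j. if j = i then obs m (h - 1) (sub i S) else tverts m (h - 1))"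
  have CsV: "Cs j \<subseteq> tverts m (h - 1)" if "j < m" for j
    unfolding Cs_def using obs_sub[OF subV'[OF i]] by auto
  have "obs m h (gl m (Some [] \<in> S) False (\<lambda>i. sub i S)) \<subseteq> gl m True False Cs"
  proof (rule ub[OF h CsV])
    show "\<forall>x\<in>tverts m h. tadj m h (Some []) x \<longrightarrow> x \<notin> gl m True False Cs \<longrightarrow>
              (\<exists>y\<in>tverts m h. tadj m h (Some []) y \<and> y \<notin> gl m True False Cs \<and> y \<noteq> x)"
    proof (rule rnb_two[of None "Some [i]"])
      show "Some [i] \<notin> gl m True False Cs" using child_gl[OF i] RAi by (simp add: Cs_def)
    qed (use child_adj[OF h i] in \<open>auto simp: tadj_root\<close>)
    fix j assume j: "j < m"
    show "wclosed (tverts m (h - 1)) (tadj m (h - 1)) ((Cs j - {None}) \<union> (if True then {None} else {}))"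
    proof (cases "j = i")
      case True
      then have "(Cs j - {None}) \<union> (if True then {None} else {}) = obs m (h - 1) (sub i S) \<union> {None}"
        using NAi by (auto simp: Cs_def)
      then show ?thesis using wclosed_ins[OF fcl_obs RAi] by simp
    next
      case False
      then have "(Cs j - {None}) \<union> (if True then {None} else {}) = tverts m (h - 1)" by (auto simp: Cs_def)
      then show ?thesis using wclosed_of_closed[OF fcl_V] by simp
    qed
    show "closed_nbhd (tverts m (h - 1)) (tadj m (h - 1)) (sub j S - {None}) \<subseteq> (Cs j - {None}) \<union> (if True then {None} else {})"
      unfolding Cs_def using cn_sub_child[OF j] cn_sub_childV[OF j] by auto
  qed (use b in auto)
  then have UB: "obs m h S \<subseteq> gl m True False Cs" using Sgl by simp
  show "None \<notin> obs m h S" using UB by auto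
  show "Some [i] \<notin> obs m h S" using UB child_gl[OF i] RAi by (auto simp: Cs_def)
  obtain j0 where j0: "j0 < m" "j0 \<noteq> i" using other_idx[OF i] by blast
  show "Some [] \<in> obs m h S" using typeI_child_root(1)[OF j0(1) oth[OF j0]] .
  show "\<And>j. j < m \<Longrightarrow> j \<noteq> i \<Longrightarrow> Some [j] \<in> obs m h S" using typeI_child_root(2) oth by blast
  have YB: "tverts m (h - 1) \<subseteq> Yset m h (obs m h (insert None S)) j" if "j < m" "j \<noteq> i" for j
    using simB[OF that(1)] oth[OF that] by simp
  have cB: "Some [j] \<in> obs m h (insert None S)" if "j < m" "j \<noteq> i" for j
    using subsetD[OF YB[OF that] tverts_root] Y_child[of m h "obs m h (insert None S)" j] by blast
  have ciB: "Some [i] \<in> obs m h (insert None S)"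
    by (rule force_ri[OF h i rootB NoneB cB])
  show "obs m h (insert None S) = tverts m h"
  proof (rule full_obs[OF h SNV NoneB rootB])
    fix j assume j: "j < m"
    show "tverts m (h - 1) \<subseteq> Yset m h (obs m h (insert None S)) j"
    proof (cases "j = i")
      case True
      then show ?thesis using simB2[OF i rootB ciB] allB[OF i] by simp
    qed (use YB j in auto)
  qed
qed

lemma K2oc:
  assumes odd: "odd h" and b: "Some [] \<notin> S"
    and allB: "\<And>i. i < m \<Longrightarrow> obs m (h - 1) (insert None (sub i S)) = tverts m (h - 1)"
    and inv: "\<And>T. typeII m (h - 1) T \<Longrightarrow> None \<notin> obs m (h - 1) T \<and> (Some [] \<in> obs m (h - 1) T \<longleftrightarrow> odd (h - 1))"
    and i: "i < m" "i' < m" "i \<noteq> i'" and Ai: "obs m (h - 1) (sub i S) \<noteq> tverts m (h - 1)"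
    and Ai': "obs m (h - 1) (sub i' S) \<noteq> tverts m (h - 1)"
  shows "obs m h (insert None S) \<noteq> tverts m h"
proof -
  have R: "Some [] \<notin> obs m (h - 1) (sub k S)" "None \<notin> obs m (h - 1) (sub k S)"
    if "k < m" "obs m (h - 1) (sub k S) \<noteq> tverts m (h - 1)" for k
    using inv[OF childII[OF that allB[OF that(1)]]] odd by auto
  define Cs where "Cs = (\<lambda>j. if j = i \<or> j = i' then obs m (h - 1) (sub j S) else tverts m (h - 1))"
  have CsV: "Cs j \<subseteq> tverts m (h - 1)" if "j < m" for j
    unfolding Cs_def using obs_sub[OF subV'[OF that]] by auto
  have "obs m h (gl m (Some [] \<in> S) True (\<lambda>i. sub i S)) \<subseteq> gl m True True Cs"
  proof (rule ub[OF h CsV])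
    show "\<forall>x\<in>tverts m h. tadj m h (Some []) x \<longrightarrow> x \<notin> gl m True True Cs \<longrightarrow>
              (\<exists>y\<in>tverts m h. tadj m h (Some []) y \<and> y \<notin> gl m True True Cs \<and> y \<noteq> x)"
    proof (rule rnb_two[of "Some [i]" "Some [i']"])
      show "Some [i] \<notin> gl m True True Cs" using child_gl[OF i(1)] R(1)[OF i(1) Ai] by (simp add: Cs_def)
      show "Some [i'] \<notin> gl m True True Cs" using child_gl[OF i(2)] R(1)[OF i(2) Ai'] by (simp add: Cs_def)
    qed (use child_adj[OF h i(1)] child_adj[OF h i(2)] i(3) in auto)
    fix j assume j: "j < m"
    show "wclosed (tverts m (h - 1)) (tadj m (h - 1)) ((Cs j - {None}) \<union> (if True then {None} else {}))"
    proof (cases "j = i \<or> j = i'")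
      case True
      then have Aj: "obs m (h - 1) (sub j S) \<noteq> tverts m (h - 1)" using Ai Ai' by auto
      then have "(Cs j - {None}) \<union> (if True then {None} else {}) = obs m (h - 1) (sub j S) \<union> {None}"
        using R(2)[OF j Aj] True by (auto simp: Cs_def)
      then show ?thesis using wclosed_ins[OF fcl_obs R(1)[OF j Aj]] by simp
    next
      case False
      then have "(Cs j - {None}) \<union> (if True then {None} else {}) = tverts m (h - 1)" by (auto simp: Cs_def)
      then show ?thesis using wclosed_of_closed[OF fcl_V] by simp
    qed
    show "closed_nbhd (tverts m (h - 1)) (tadj m (h - 1)) (sub j S - {None}) \<subseteq> (Cs j - {None}) \<union> (if True then {None} else {})"
      unfolding Cs_def using cn_sub_child[OF j] cn_sub_childV[OF j] by auto
  qed (use b in auto)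
  then have UB: "obs m h (insert None S) \<subseteq> gl m True True Cs" using SNgl by simp
  have "Some [i] \<notin> obs m h (insert None S)" using UB child_gl[OF i(1)] R(1)[OF i(1) Ai] by (auto simp: Cs_def)
  moreover have "Some [i] \<in> tverts m h" using child_adj[OF h i(1)] by simp
  ultimately show ?thesis by blast
qed

lemma K2ea:
  assumes ev: "even h"
    and allB: "\<And>i. i < m \<Longrightarrow> obs m (h - 1) (insert None (sub i S)) = tverts m (h - 1)"
    and inv: "\<And>T. typeII m (h - 1) T \<Longrightarrow> None \<notin> obs m (h - 1) T \<and> (Some [] \<in> obs m (h - 1) T \<longleftrightarrow> odd (h - 1))"
    and j0: "j0 < m" "obs m (h - 1) (sub j0 S) = tverts m (h - 1)"
  shows "obs m h S = tverts m h"
proof -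
  have r: "Some [] \<in> obs m h S" using typeI_child_root(1)[OF j0] .
  have c: "Some [i] \<in> obs m h S" if i: "i < m" for i
  proof (cases "obs m (h - 1) (sub i S) = tverts m (h - 1)")
    case True then show ?thesis using typeI_child_root(2)[OF i] by simp
  next
    case False
    have "Some [] \<in> obs m (h - 1) (sub i S)" using inv[OF childII[OF i False allB[OF i]]] ev h by auto
    then show ?thesis using simA[OF i] Y_child[of m h "obs m h S" i] by auto
  qed
  have N: "None \<in> obs m h S" by (rule force_r'[OF r c])
  show ?thesis
  proof (rule full_obs[OF h SV N r])
    fix i assume i: "i < m"
    show "tverts m (h - 1) \<subseteq> Yset m h (obs m h S) i" using simA2[OF i r c[OF i]] allB[OF i] by simp
  qed
qed

lemma K2eb:
  assumes ev: "even h" and b: "Some [] \<notin> S"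
    and allB: "\<And>i. i < m \<Longrightarrow> obs m (h - 1) (insert None (sub i S)) = tverts m (h - 1)"
    and inv: "\<And>T. typeII m (h - 1) T \<Longrightarrow> None \<notin> obs m (h - 1) T \<and> (Some [] \<in> obs m (h - 1) T \<longleftrightarrow> odd (h - 1))"
    and allA: "\<And>i. i < m \<Longrightarrow> obs m (h - 1) (sub i S) \<noteq> tverts m (h - 1)"
  shows "obs m h (insert None S) = tverts m h" "None \<notin> obs m h S" "Some [] \<notin> obs m h S"
     "\<And>j. j < m \<Longrightarrow> Some [j] \<in> obs m h S"
proof -
  have R: "Some [] \<in> obs m (h - 1) (sub k S)" "None \<notin> obs m (h - 1) (sub k S)" if "k < m" for k
    using inv[OF childII[OF that allA[OF that] allB[OF that]]] ev h by auto
  have "obs m h (gl m (Some [] \<in> S) False (\<lambda>i. sub i S)) \<subseteq> gl m False False (\<lambda>j. obs m (h - 1) (sub j S))"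
  proof (rule ub[OF h])
    fix j assume j: "j < m"
    show "obs m (h - 1) (sub j S) \<subseteq> tverts m (h - 1)" using obs_sub[OF subV'[OF j]] .
    have eq: "(obs m (h - 1) (sub j S) - {None}) \<union> (if False then {None} else {}) = obs m (h - 1) (sub j S)"
      using R(2)[OF j] by auto
    show "wclosed (tverts m (h - 1)) (tadj m (h - 1)) ((obs m (h - 1) (sub j S) - {None}) \<union> (if False then {None} else {}))"
      unfolding eq by (rule wclosed_of_closed[OF fcl_obs])
    show "closed_nbhd (tverts m (h - 1)) (tadj m (h - 1)) (sub j S - {None}) \<subseteq> (obs m (h - 1) (sub j S) - {None}) \<union> (if False then {None} else {})"
      unfolding eq by (rule cn_sub_child[OF j])
  qed (use b in auto)
  then have UB: "obs m h S \<subseteq> gl m False False (\<lambda>j. obs m (h - 1) (sub j S))" using Sgl by simp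
  show "None \<notin> obs m h S" "Some [] \<notin> obs m h S" using UB by auto
  show "\<And>j. j < m \<Longrightarrow> Some [j] \<in> obs m h S"
    using R(1) simA Y_child[of m h "obs m h S"] by blast
  have cB: "Some [j] \<in> obs m h (insert None S)" if "j < m" for j
    using R(1)[OF that] simB[OF that] Y_child[of m h "obs m h (insert None S)" j] by auto
  show "obs m h (insert None S) = tverts m h"
  proof (rule full_obs[OF h SNV NoneB rootB])
    fix j assume j: "j < m"
    show "tverts m (h - 1) \<subseteq> Yset m h (obs m h (insert None S)) j"
      using simB2[OF j rootB cB[OF j]] allB[OF j] by simp
  qed
qed

end


lemma step_cases:
  assumes h: "1 \<le> h" and m2: "2 \<le> m" and S: "S \<subseteq> tverts m h - {None}"
    and inv: "\<And>T. typeII m (h - 1) T \<Longrightarrow> None \<notin> obs m (h - 1) T \<and> (Some [] \<in> obs m (h - 1) T \<longleftrightarrow> odd (h - 1))"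
    and II: "obs m h S \<noteq> tverts m h" "obs m h (insert None S) = tverts m h"
  shows "(\<forall>i<m. obs m (h - 1) (insert None (sub i S)) = tverts m (h - 1)) \<and> Some [] \<notin> S \<and>
     (if odd h then (\<exists>i<m. obs m (h - 1) (sub i S) \<noteq> tverts m (h - 1) \<and>
                        (\<forall>j<m. j \<noteq> i \<longrightarrow> obs m (h - 1) (sub j S) = tverts m (h - 1)))
      else (\<forall>i<m. obs m (h - 1) (sub i S) \<noteq> tverts m (h - 1)))"
proof -
  have allB: "\<forall>i<m. obs m (h - 1) (insert None (sub i S)) = tverts m (h - 1)"
    using K0[OF h m2 S] II(2) by blast
  have b: "Some [] \<notin> S" using K1[OF h m2 S] allB II(1) by blast
  show ?thesis
  proof (cases "odd h")
    case odd: True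
    have "\<exists>i<m. obs m (h - 1) (sub i S) \<noteq> tverts m (h - 1) \<and>
                        (\<forall>j<m. j \<noteq> i \<longrightarrow> obs m (h - 1) (sub j S) = tverts m (h - 1))"
    proof -
      obtain i where i: "i < m" "obs m (h - 1) (sub i S) \<noteq> tverts m (h - 1)"
        using K2a[OF h m2 S] II(1) by blast
      have "\<forall>j<m. j \<noteq> i \<longrightarrow> obs m (h - 1) (sub j S) = tverts m (h - 1)"
      proof (intro allI impI)
        fix j assume j: "j < m" "j \<noteq> i"
        show "obs m (h - 1) (sub j S) = tverts m (h - 1)"
        proof (rule ccontr)
          assume "obs m (h - 1) (sub j S) \<noteq> tverts m (h - 1)"
          from K2oc[OF h m2 S odd b _ inv i(1) j(1) j(2)[symmetric] i(2) this] allB II(2)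
          show False by blast
        qed
      qed
      then show ?thesis using i by blast
    qed
    then show ?thesis using allB b odd by simp
  next
    case ev: False
    have "\<forall>i<m. obs m (h - 1) (sub i S) \<noteq> tverts m (h - 1)"
      using K2ea[OF h m2 S _ _ inv] ev allB II(1) by blast
    then show ?thesis using allB b ev by simp
  qed
qed

lemma inv_all:
  assumes m2: "2 \<le> m"
  shows "typeII m h T \<Longrightarrow> None \<notin> obs m h T \<and> (Some [] \<in> obs m h T \<longleftrightarrow> odd h)"
proof (induction h arbitrary: T)
  case 0 then show ?case using base_inv by simp
next
  case (Suc h')
  have h: "1 \<le> Suc h'" by simp
  have inv: "\<And>T. typeII m (Suc h' - 1) T \<Longrightarrow> None \<notin> obs m (Suc h' - 1) T \<and> (Some [] \<in> obs m (Suc h' - 1) T \<longleftrightarrow> odd (Suc h' - 1))"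
    using Suc.IH by simp
  have S: "T \<subseteq> tverts m (Suc h') - {None}" and II: "obs m (Suc h') T \<noteq> tverts m (Suc h')"
     "obs m (Suc h') (insert None T) = tverts m (Suc h')" using Suc.prems by (auto simp: typeII_iff)
  note sc = step_cases[OF h m2 S inv II]
  show ?case
  proof (cases "odd (Suc h')")
    case odd: True
    then obtain i where i: "i < m" "obs m (Suc h' - 1) (sub i T) \<noteq> tverts m (Suc h' - 1)"
      "\<forall>j<m. j \<noteq> i \<longrightarrow> obs m (Suc h' - 1) (sub j T) = tverts m (Suc h' - 1)" using sc by auto
    note k = K2ob[OF h m2 S odd _ _ inv i(1,2)]
    show ?thesis using k(2,3) sc i(3) odd by auto
  next
    case ev: False
    note k = K2eb[OF h m2 S _ _ _ inv]
    show ?thesis using k(2,3) sc ev by auto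
  qed
qed

lemma part1:
  assumes m2: "2 \<le> m" and h: "1 \<le> h" and II: "typeII m h S"
  shows "if odd h then (\<exists>i<m. closed_nbhd (tverts m h) (tadj m h) {Some []} - obs m h S = {None, Some [i]})
         else closed_nbhd (tverts m h) (tadj m h) {Some []} - obs m h S = {None, Some []}"
proof -
  have inv: "\<And>T. typeII m (h - 1) T \<Longrightarrow> None \<notin> obs m (h - 1) T \<and> (Some [] \<in> obs m (h - 1) T \<longleftrightarrow> odd (h - 1))"
    using inv_all[OF m2] by blast
  have S: "S \<subseteq> tverts m h - {None}" and II': "obs m h S \<noteq> tverts m h"
     "obs m h (insert None S) = tverts m h" using II by (auto simp: typeII_iff)
  note sc = step_cases[OF h m2 S inv II']
  have N: "closed_nbhd (tverts m h) (tadj m h) {Some []} = {None, Some []} \<union> {Some [j] | j. j < m}"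
    using h by (auto simp: closed_nbhd_def tadj_root tverts_Some)
  show ?thesis
  proof (cases "odd h")
    case odd: True
    then obtain i where i: "i < m" "obs m (h - 1) (sub i S) \<noteq> tverts m (h - 1)"
      "\<forall>j<m. j \<noteq> i \<longrightarrow> obs m (h - 1) (sub j S) = tverts m (h - 1)" using sc by auto
    note k = K2ob[OF h m2 S odd _ _ inv i(1,2)]
    have "closed_nbhd (tverts m h) (tadj m h) {Some []} - obs m h S = {None, Some [i]}"
      unfolding N using k(2-5) sc i(3) i(1) by auto
    then show ?thesis using odd i(1) by auto
  next
    case ev: False
    note k = K2eb[OF h m2 S _ _ _ inv]
    have "closed_nbhd (tverts m h) (tadj m h) {Some []} - obs m h S = {None, Some []}"
      unfolding N using k(2-4) sc ev by auto
    then show ?thesis using ev by simp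
  qed
qed


context
  fixes m h :: nat and S :: "nat list option set"
  assumes h: "1 \<le> h" and m2: "2 \<le> m" and S: "S \<subseteq> tverts m h - {None}"
begin

lemma inv': "typeII m (h - 1) T \<Longrightarrow> None \<notin> obs m (h - 1) T \<and> (Some [] \<in> obs m (h - 1) T \<longleftrightarrow> odd (h - 1))"
  using inv_all[OF m2] by blast

lemma tI_iff: "i < m \<Longrightarrow> typeI m (h - 1) (sub i S) \<longleftrightarrow> obs m (h - 1) (sub i S) = tverts m (h - 1)"
  using subV[OF h m2 S] by (simp add: typeI_iff)

lemma tII_iff: "i < m \<Longrightarrow> typeII m (h - 1) (sub i S) \<longleftrightarrow> obs m (h - 1) (sub i S) \<noteq> tverts m (h - 1) \<and> obs m (h - 1) (insert None (sub i S)) = tverts m (h - 1)"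
  using subV[OF h m2 S] by (simp add: typeII_iff)

lemma AiBi: "i < m \<Longrightarrow> obs m (h - 1) (sub i S) = tverts m (h - 1) \<Longrightarrow> obs m (h - 1) (insert None (sub i S)) = tverts m (h - 1)"
  using pd_mono[of "tverts m (h - 1)" "sub i S" "insert None (sub i S)" "tadj m (h - 1)"]
    obs_sub[OF subVN[OF h m2 S]] by auto

lemma tIII_iff: "i < m \<Longrightarrow> typeI m (h - 1) (sub i S) \<or> typeII m (h - 1) (sub i S) \<longleftrightarrow> obs m (h - 1) (insert None (sub i S)) = tverts m (h - 1)"
  using tI_iff tII_iff AiBi by blast

lemma ABfull: "obs m h S = tverts m h \<Longrightarrow> obs m h (insert None S) = tverts m h"
  using AB[OF h m2 S] obs_sub[OF SNV[OF h m2 S]] by auto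

lemma clsI: "typeI m h S \<longleftrightarrow> (\<forall>i<m. typeI m (h - 1) (sub i S) \<or> typeII m (h - 1) (sub i S)) \<and>
   (Some [] \<in> S \<or> (odd h \<and> (\<forall>i<m. typeI m (h - 1) (sub i S))) \<or> (even h \<and> (\<exists>i<m. typeI m (h - 1) (sub i S))))"
proof
  assume "typeI m h S"
  then have A: "obs m h S = tverts m h" by (simp add: typeI_iff)
  have B: "obs m h (insert None S) = tverts m h" by (rule ABfull[OF A])
  have allB: "\<And>i. i < m \<Longrightarrow> obs m (h - 1) (insert None (sub i S)) = tverts m (h - 1)"
    using K0[OF h m2 S] B by blast
  have rest: "Some [] \<in> S \<or> (odd h \<and> (\<forall>i<m. typeI m (h - 1) (sub i S))) \<or> (even h \<and> (\<exists>i<m. typeI m (h - 1) (sub i S)))"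
  proof (cases "Some [] \<in> S")
    case b: False
    show ?thesis
    proof (cases "odd h")
      case odd: True
      have "\<forall>i<m. obs m (h - 1) (sub i S) = tverts m (h - 1)"
      proof (rule ccontr)
        assume "\<not> ?thesis"
        then obtain i where i: "i < m" "obs m (h - 1) (sub i S) \<noteq> tverts m (h - 1)" by blast
        show False
        proof (cases "\<exists>j<m. j \<noteq> i \<and> obs m (h - 1) (sub j S) \<noteq> tverts m (h - 1)")
          case True
          then obtain j where j: "j < m" "j \<noteq> i" "obs m (h - 1) (sub j S) \<noteq> tverts m (h - 1)" by blast
          show False using K2oc[OF h m2 S odd b allB inv' i(1) j(1) j(2)[symmetric] i(2) j(3)] B by blast
        next
          case False
          then have "None \<notin> obs m h S" using K2ob(2)[OF h m2 S odd b allB inv' i] by blast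
          then show False using A by simp
        qed
      qed
      then show ?thesis using odd tI_iff by blast
    next
      case ev: False
      have "\<exists>i<m. obs m (h - 1) (sub i S) = tverts m (h - 1)"
      proof (rule ccontr)
        assume "\<not> ?thesis"
        then have "None \<notin> obs m h S" using K2eb(2)[OF h m2 S _ b allB inv'] ev by blast
        then show False using A by simp
      qed
      then show ?thesis using ev tI_iff by blast
    qed
  qed simp
  show "(\<forall>i<m. typeI m (h - 1) (sub i S) \<or> typeII m (h - 1) (sub i S)) \<and>
   (Some [] \<in> S \<or> (odd h \<and> (\<forall>i<m. typeI m (h - 1) (sub i S))) \<or> (even h \<and> (\<exists>i<m. typeI m (h - 1) (sub i S))))"
    using rest allB tIII_iff by blast
next
  assume a: "(\<forall>i<m. typeI m (h - 1) (sub i S) \<or> typeII m (h - 1) (sub i S)) \<and>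
   (Some [] \<in> S \<or> (odd h \<and> (\<forall>i<m. typeI m (h - 1) (sub i S))) \<or> (even h \<and> (\<exists>i<m. typeI m (h - 1) (sub i S))))"
  have allB: "\<And>i. i < m \<Longrightarrow> obs m (h - 1) (insert None (sub i S)) = tverts m (h - 1)"
    using a tIII_iff by blast
  have "obs m h S = tverts m h"
  proof (cases "Some [] \<in> S")
    case True then show ?thesis using K1[OF h m2 S True allB] by blast
  next
    case False
    then have "(odd h \<and> (\<forall>i<m. typeI m (h - 1) (sub i S))) \<or> (even h \<and> (\<exists>i<m. typeI m (h - 1) (sub i S)))"
      using a by blast
    then show ?thesis
    proof
      assume "odd h \<and> (\<forall>i<m. typeI m (h - 1) (sub i S))"
      then show ?thesis using K2a[OF h m2 S] tI_iff by blast
    next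
      assume "even h \<and> (\<exists>i<m. typeI m (h - 1) (sub i S))"
      then obtain j where "even h" "j < m" "typeI m (h - 1) (sub j S)" by blast
      then show ?thesis using K2ea[OF h m2 S _ allB inv'] tI_iff by blast
    qed
  qed
  then show "typeI m h S" using S by (simp add: typeI_iff)
qed

lemma clsII: "typeII m h S \<longleftrightarrow> (\<forall>i<m. typeI m (h - 1) (sub i S) \<or> typeII m (h - 1) (sub i S)) \<and> Some [] \<notin> S \<and>
   (if odd h then card {i. i < m \<and> typeII m (h - 1) (sub i S)} = 1 else (\<forall>i<m. typeII m (h - 1) (sub i S)))"
proof
  assume "typeII m h S"
  then have II: "obs m h S \<noteq> tverts m h" "obs m h (insert None S) = tverts m h" by (auto simp: typeII_iff)
  note sc = step_cases[OF h m2 S inv' II]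
  have allB: "\<And>i. i < m \<Longrightarrow> obs m (h - 1) (insert None (sub i S)) = tverts m (h - 1)" using sc by blast
  have tII': "\<And>i. i < m \<Longrightarrow> typeII m (h - 1) (sub i S) \<longleftrightarrow> obs m (h - 1) (sub i S) \<noteq> tverts m (h - 1)"
    using tII_iff allB by blast
  have last: "if odd h then card {i. i < m \<and> typeII m (h - 1) (sub i S)} = 1 else (\<forall>i<m. typeII m (h - 1) (sub i S))"
  proof (cases "odd h")
    case True
    then obtain i where i: "i < m" "obs m (h - 1) (sub i S) \<noteq> tverts m (h - 1)"
      "\<forall>j<m. j \<noteq> i \<longrightarrow> obs m (h - 1) (sub j S) = tverts m (h - 1)" using sc by auto
    then have "{i. i < m \<and> typeII m (h - 1) (sub i S)} = {i}" using tII' by auto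
    then show ?thesis using True by simp
  next
    case False
    then show ?thesis using sc tII' by auto
  qed
  show "(\<forall>i<m. typeI m (h - 1) (sub i S) \<or> typeII m (h - 1) (sub i S)) \<and> Some [] \<notin> S \<and>
   (if odd h then card {i. i < m \<and> typeII m (h - 1) (sub i S)} = 1 else (\<forall>i<m. typeII m (h - 1) (sub i S)))"
    using last sc allB tIII_iff by blast
next
  assume a: "(\<forall>i<m. typeI m (h - 1) (sub i S) \<or> typeII m (h - 1) (sub i S)) \<and> Some [] \<notin> S \<and>
   (if odd h then card {i. i < m \<and> typeII m (h - 1) (sub i S)} = 1 else (\<forall>i<m. typeII m (h - 1) (sub i S)))"
  have allB: "\<And>i. i < m \<Longrightarrow> obs m (h - 1) (insert None (sub i S)) = tverts m (h - 1)"
    using a tIII_iff by blast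
  have tII': "\<And>i. i < m \<Longrightarrow> typeII m (h - 1) (sub i S) \<longleftrightarrow> obs m (h - 1) (sub i S) \<noteq> tverts m (h - 1)"
    using tII_iff allB by blast
  have b: "Some [] \<notin> S" using a by blast
  have "obs m h S \<noteq> tverts m h \<and> obs m h (insert None S) = tverts m h"
  proof (cases "odd h")
    case odd: True
    then have "card {i. i < m \<and> typeII m (h - 1) (sub i S)} = 1" using a by simp
    then obtain i where i: "{i. i < m \<and> typeII m (h - 1) (sub i S)} = {i}" by (rule card_1_singletonE)
    then have i1: "i < m" "obs m (h - 1) (sub i S) \<noteq> tverts m (h - 1)" using tII' by auto
    have oth: "\<And>j. j < m \<Longrightarrow> j \<noteq> i \<Longrightarrow> obs m (h - 1) (sub j S) = tverts m (h - 1)"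
      using i tII' by blast
    note k = K2ob[OF h m2 S odd b allB inv' i1 oth]
    show ?thesis using k(1,2) by auto
  next
    case ev: False
    then have "\<And>i. i < m \<Longrightarrow> obs m (h - 1) (sub i S) \<noteq> tverts m (h - 1)" using a tII' by auto
    note k = K2eb[OF h m2 S _ b allB inv' this]
    show ?thesis using k(1,2) ev by auto
  qed
  then show "typeII m h S" using S by (simp add: typeII_iff)
qed

end




definition Lset :: "nat \<Rightarrow> nat \<Rightarrow> nat list set" where
  "Lset n k = {zs. length zs = n \<and> sum_list zs = k}"

lemma finite_Lset[simp]: "finite (Lset n k)"
proof (rule finite_subset)
  show "Lset n k \<subseteq> {zs. set zs \<subseteq> {..k} \<and> length zs = n}"
    unfolding Lset_def using member_le_sum_list by fastforce
  show "finite {zs. set zs \<subseteq> {..k} \<and> length zs = n}" by (rule finite_lists_length_eq) simp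
qed

lemma Lset_0: "Lset 0 k = (if k = 0 then {[]} else {})"
  by (auto simp: Lset_def)

lemma Lset_Suc: "Lset (Suc n) k = (\<Union>j\<in>{..k}. (#) j ` Lset n (k - j))"
proof (rule set_eqI)
  fix zs show "zs \<in> Lset (Suc n) k \<longleftrightarrow> zs \<in> (\<Union>j\<in>{..k}. (#) j ` Lset n (k - j))"
  proof
    assume "zs \<in> Lset (Suc n) k"
    then obtain j ws where "zs = j # ws" "length ws = n" "j + sum_list ws = k"
      unfolding Lset_def by (cases zs) auto
    then show "zs \<in> (\<Union>j\<in>{..k}. (#) j ` Lset n (k - j))" unfolding Lset_def
      by (intro UN_I[of j]) (auto intro!: image_eqI[of _ _ ws])
  next
    assume "zs \<in> (\<Union>j\<in>{..k}. (#) j ` Lset n (k - j))"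
    then obtain j ws where "j \<le> k" "zs = j # ws" "length ws = n" "sum_list ws = k - j"
      unfolding Lset_def by auto
    then show "zs \<in> Lset (Suc n) k" unfolding Lset_def by auto
  qed
qed

lemma sum_Lset_Suc:
  "(\<Sum>zs\<in>Lset (Suc n) k. (H zs :: 'a :: comm_monoid_add)) = (\<Sum>j\<le>k. \<Sum>ws\<in>Lset n (k - j). H (j # ws))"
proof -
  have "(\<Sum>zs\<in>Lset (Suc n) k. H zs) = (\<Sum>j\<le>k. \<Sum>zs\<in>(#) j ` Lset n (k - j). H zs)"
    unfolding Lset_Suc by (rule sum.UNION_disjoint) auto
  also have "\<dots> = (\<Sum>j\<le>k. \<Sum>ws\<in>Lset n (k - j). H (j # ws))"
    by (rule sum.cong[OF refl]) (simp add: sum.reindex)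
  finally show ?thesis .
qed

definition Q :: "(nat \<Rightarrow> nat) \<Rightarrow> (nat \<Rightarrow> nat) \<Rightarrow> nat \<Rightarrow> nat \<Rightarrow> nat \<Rightarrow> nat" where
  "Q f g a b k = (\<Sum>zs\<in>Lset (a + b) k. prod_list (map f (take a zs)) * prod_list (map g (drop a zs)))"

lemma Q_fps: "Q f g a b k = (Abs_fps f ^ a * Abs_fps g ^ b) $ k"
proof (induction a arbitrary: k)
  case 0
  show ?case
  proof (induction b arbitrary: k)
    case 0 then show ?case by (simp add: Q_def Lset_0)
  next
    case (Suc b)
    have "Q f g 0 (Suc b) k = (\<Sum>j\<le>k. \<Sum>ws\<in>Lset b (k - j). g j * prod_list (map g ws))"
      unfolding Q_def by (simp add: sum_Lset_Suc)
    also have "\<dots> = (\<Sum>j\<le>k. g j * Q f g 0 b (k - j))"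
      by (simp add: Q_def sum_distrib_left)
    also have "\<dots> = (Abs_fps g * Abs_fps g ^ b) $ k"
      by (simp add: fps_mult_nth Suc atLeast0AtMost)
    finally show ?case by simp
  qed
next
  case (Suc a)
  have "Q f g (Suc a) b k = (\<Sum>j\<le>k. \<Sum>ws\<in>Lset (a + b) (k - j). f j * (prod_list (map f (take a ws)) * prod_list (map g (drop a ws))))"
    unfolding Q_def by (simp add: sum_Lset_Suc mult.assoc)
  also have "\<dots> = (\<Sum>j\<le>k. f j * Q f g a b (k - j))"
    by (simp add: Q_def sum_distrib_left)
  also have "\<dots> = (Abs_fps f * (Abs_fps f ^ a * Abs_fps g ^ b)) $ k"
    by (simp add: fps_mult_nth Suc atLeast0AtMost)
  finally show ?case by (simp add: mult.assoc)
qed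


lemma prod_map_mset: "prod_list (map f xs) = prod_mset (image_mset f (mset xs))"
  by (simp flip: prod_mset_prod_list)

lemma multinom_eq:
  assumes "sum_list xs \<le> k"
  shows "multinom (length xs) (\<lambda>\<alpha>. count_list xs \<alpha>) k = card (permutations_of_multiset (mset xs))"
proof -
  have sub: "set_mset (mset xs) \<subseteq> {..k}" using assms member_le_sum_list by fastforce
  have "(\<Prod>x\<in>set_mset (mset xs). fact (count (mset xs) x) :: nat) = (\<Prod>x\<in>set_mset (mset xs). fact (count_list xs x))"
    by (simp add: count_mset)
  also have "\<dots> = (\<Prod>\<alpha>\<le>k. fact (count_list xs \<alpha>))"
    by (rule prod.mono_neutral_left) (use sub in auto)
  finally have "(\<Prod>\<alpha>\<le>k. fact (count_list xs \<alpha>)) = (\<Prod>x\<in>set_mset (mset xs). fact (count (mset xs) x) :: nat)" by simp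
  then show ?thesis unfolding multinom_def card_permutations_of_multiset(1) by simp
qed

definition Pm :: "nat \<Rightarrow> nat \<Rightarrow> nat list \<Rightarrow> nat list set" where
  "Pm m l y = {zs. length zs = m \<and> mset (take l zs) = mset (take l y) \<and> mset (drop l zs) = mset (drop l y)}"

lemma card_Pm:
  assumes "l \<le> m" "length y = m"
  shows "card (Pm m l y) = card (permutations_of_multiset (mset (take l y))) * card (permutations_of_multiset (mset (drop l y)))"
proof -
  let ?A = "permutations_of_multiset (mset (take l y))" and ?B = "permutations_of_multiset (mset (drop l y))"
  have "bij_betw (\<lambda>zs. (take l zs, drop l zs)) (Pm m l y) (?A \<times> ?B)"
  proof (rule bij_betw_byWitness[where f' = "\<lambda>(p, q). p @ q"])
    show "\<forall>a\<in>Pm m l y. (case (take l a, drop l a) of (p, q) \<Rightarrow> p @ q) = a" by simp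
    show "\<forall>a'\<in>?A \<times> ?B. (take l (case a' of (p, q) \<Rightarrow> p @ q), drop l (case a' of (p, q) \<Rightarrow> p @ q)) = a'"
    proof
      fix a' assume "a' \<in> ?A \<times> ?B"
      then obtain p q where a': "a' = (p, q)" "mset p = mset (take l y)" "mset q = mset (drop l y)"
        by (auto simp: permutations_of_multiset_def)
      have "size (mset p) = size (mset (take l y))" using a'(2) by simp
      then have "length p = length (take l y)" by (simp only: size_mset)
      then have "length p = l" using assms by simp
      then show "(take l (case a' of (p, q) \<Rightarrow> p @ q), drop l (case a' of (p, q) \<Rightarrow> p @ q)) = a'"
        using a' by simp
    qed
    show "(\<lambda>zs. (take l zs, drop l zs)) ` Pm m l y \<subseteq> ?A \<times> ?B"
      by (auto simp: Pm_def permutations_of_multiset_def)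
    show "(\<lambda>(p, q). p @ q) ` (?A \<times> ?B) \<subseteq> Pm m l y"
    proof
      fix z assume "z \<in> (\<lambda>(p, q). p @ q) ` (?A \<times> ?B)"
      then obtain p q where z: "z = p @ q" "mset p = mset (take l y)" "mset q = mset (drop l y)"
        by (auto simp: permutations_of_multiset_def)
      have "size (mset p) = size (mset (take l y))" using z(2) by simp
      then have "length p = length (take l y)" by (simp only: size_mset)
      then have lp: "length p = l" using assms by simp
      have "size (mset q) = size (mset (drop l y))" using z(3) by simp
      then have "length q = length (drop l y)" by (simp only: size_mset)
      then have "length q = m - l" using assms by simp
      then show "z \<in> Pm m l y" using z lp assms by (simp add: Pm_def)
    qed
  qed
  then have "card (Pm m l y) = card (?A \<times> ?B)" by (rule bij_betw_same_card)
  then show ?thesis by (simp add: card_cartesian_product)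
qed

definition Sset :: "nat \<Rightarrow> nat \<Rightarrow> nat \<Rightarrow> nat list set" where
  "Sset m l k = {xs. length xs = m \<and> sorted (take l xs) \<and> sorted (drop l xs) \<and> sum_list xs = k}"

definition srt :: "nat \<Rightarrow> nat list \<Rightarrow> nat list" where
  "srt l zs = sort (take l zs) @ sort (drop l zs)"

lemma sum_take_drop: "sum_list xs = sum_list (take l xs) + sum_list (drop l xs)"
  by (metis append_take_drop_id sum_list_append)

lemma srt_in: "l \<le> m \<Longrightarrow> zs \<in> Lset m k \<Longrightarrow> srt l zs \<in> Sset m l k"
proof -
  assume a: "l \<le> m" "zs \<in> Lset m k"
  have lt: "length (sort (take l zs)) = l" using a by (simp add: Lset_def)
  have "sum_list (sort (take l zs)) = sum_list (take l zs)" "sum_list (sort (drop l zs)) = sum_list (drop l zs)"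
    by (simp_all flip: sum_mset_sum_list)
  then have "sum_list (srt l zs) = k" using a sum_take_drop[of zs l] by (simp add: srt_def Lset_def)
  moreover have "length (srt l zs) = m" using a by (simp add: srt_def Lset_def)
  ultimately show ?thesis using lt by (simp add: Sset_def srt_def)
qed

lemma fiber:
  assumes "l \<le> m" "y \<in> Sset m l k"
  shows "{zs \<in> Lset m k. srt l zs = y} = Pm m l y"
proof (rule set_eqI)
  fix zs
  have ly: "length y = m" "sorted (take l y)" "sorted (drop l y)" "sum_list y = k" using assms(2) by (auto simp: Sset_def)
  show "zs \<in> {zs \<in> Lset m k. srt l zs = y} \<longleftrightarrow> zs \<in> Pm m l y"
  proof
    assume "zs \<in> {zs \<in> Lset m k. srt l zs = y}"
    then have z: "length zs = m" "sort (take l zs) @ sort (drop l zs) = y" by (auto simp: Lset_def srt_def)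
    have "length (sort (take l zs)) = l" using z assms(1) by simp
    then have "take l y = sort (take l zs)" "drop l y = sort (drop l zs)" using z(2) by auto
    then show "zs \<in> Pm m l y" using z(1) by (simp add: Pm_def)
  next
    assume "zs \<in> Pm m l y"
    then have z: "length zs = m" "mset (take l zs) = mset (take l y)" "mset (drop l zs) = mset (drop l y)"
      by (auto simp: Pm_def)
    have "sort (take l zs) = take l y" by (rule properties_for_sort) (use z ly in auto)
    moreover have "sort (drop l zs) = drop l y" by (rule properties_for_sort) (use z ly in auto)
    ultimately have "srt l zs = y" by (simp add: srt_def)
    moreover have "sum_list zs = k"
    proof -
      have "sum_list (take l zs) = sum_list (take l y)" "sum_list (drop l zs) = sum_list (drop l y)"
        using z by (metis sum_mset_sum_list)+
      then show ?thesis using sum_take_drop[of zs l] sum_take_drop[of y l] ly(4) by simp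
    qed
    ultimately show "zs \<in> {zs \<in> Lset m k. srt l zs = y}" using z(1) by (simp add: Lset_def)
  qed
qed

lemma Sset_sub: "Sset m l k \<subseteq> Lset m k" by (auto simp: Sset_def Lset_def)

lemma bracket_sum:
  assumes lm: "l \<le> m"
  shows "(\<Sum>xs\<in>{xs. length xs = m \<and> sorted (take l xs) \<and> sorted (drop l xs) \<and> int (sum_list xs) = int k}.
       (m choose l)
       * multinom l (\<lambda>\<alpha>. count_list (take l xs) \<alpha>) (nat (int k))
       * multinom (m - l) (\<lambda>\<beta>. count_list (drop l xs) \<beta>) (nat (int k))
       * prod_list (map f (take l xs))
       * prod_list (map g (drop l xs))) = (m choose l) * Q f g l (m - l) k"
proof -
  let ?W = "\<lambda>zs. prod_list (map f (take l zs)) * prod_list (map g (drop l zs))"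
  have setEq: "{xs. length xs = m \<and> sorted (take l xs) \<and> sorted (drop l xs) \<and> int (sum_list xs) = int k} = Sset m l k"
    by (simp add: Sset_def)
  have finS: "finite (Sset m l k)" using finite_subset[OF Sset_sub finite_Lset] .
  have "Q f g l (m - l) k = (\<Sum>zs\<in>Lset m k. ?W zs)" using lm by (simp add: Q_def)
  also have "\<dots> = (\<Sum>y\<in>Sset m l k. \<Sum>zs\<in>{zs \<in> Lset m k. srt l zs = y}. ?W zs)"
    by (rule sum.group[symmetric]) (use finS srt_in[OF lm] in auto)
  also have "\<dots> = (\<Sum>y\<in>Sset m l k. card (Pm m l y) * ?W y)"
  proof (rule sum.cong[OF refl])
    fix y assume y: "y \<in> Sset m l k"
    have "(\<Sum>zs\<in>{zs \<in> Lset m k. srt l zs = y}. ?W zs) = (\<Sum>zs\<in>Pm m l y. ?W y)"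
      unfolding fiber[OF lm y]
      by (rule sum.cong[OF refl]) (auto simp: Pm_def prod_map_mset)
    then show "(\<Sum>zs\<in>{zs \<in> Lset m k. srt l zs = y}. ?W zs) = card (Pm m l y) * ?W y" by simp
  qed
  finally have Qeq: "Q f g l (m - l) k = (\<Sum>y\<in>Sset m l k. card (Pm m l y) * ?W y)" .
  have multi: "multinom l (\<lambda>\<alpha>. count_list (take l y) \<alpha>) (nat (int k)) * multinom (m - l) (\<lambda>\<beta>. count_list (drop l y) \<beta>) (nat (int k))
      = card (Pm m l y)" if y: "y \<in> Sset m l k" for y
  proof -
    have ly: "length y = m" "sum_list y = k" using y by (auto simp: Sset_def)
    have "sum_list (take l y) \<le> k" "sum_list (drop l y) \<le> k" using sum_take_drop[of y l] ly by linarith+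
    then show ?thesis
      using multinom_eq[of "take l y" k] multinom_eq[of "drop l y" k] card_Pm[OF lm ly(1)] ly lm
      by (simp add: min_absorb2)
  qed
  show ?thesis unfolding setEq Qeq sum_distrib_left
    by (rule sum.cong[OF refl]) (simp add: multi[symmetric] mult.assoc)
qed


definition Wf :: "nat fps \<Rightarrow> nat fps \<Rightarrow> nat \<Rightarrow> nat \<Rightarrow> nat fps" where
  "Wf F G n l = fps_const (n choose l) * (F ^ l * G ^ (n - l))"

lemma fps_const_Suc0[simp]: "fps_const (Suc 0) = (1 :: nat fps)"
  by (metis One_nat_def fps_const_1_eq_1)

lemma Wf_rec: "Wf F G (Suc n) l = (if l = 0 then 0 else F * Wf F G n (l - 1)) + G * Wf F G n l"
proof (cases l)
  case 0 then show ?thesis by (simp add: Wf_def)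
next
  case (Suc l')
  show ?thesis
  proof (cases "l' < n")
    case True
    then have e: "Suc (n - Suc l') = n - l'" by simp
    have "Wf F G (Suc n) l = fps_const (n choose l') * (F ^ Suc l' * G ^ (n - l')) + fps_const (n choose Suc l') * (F ^ Suc l' * G ^ (n - l'))"
      unfolding Wf_def Suc by (simp flip: fps_const_add add: distrib_right)
    also have "\<dots> = F * Wf F G n l' + G * Wf F G n (Suc l')"
    proof -
      have g: "G ^ (n - l') = G * G ^ (n - Suc l')" by (simp only: e[symmetric] power_Suc)
      have f: "F ^ Suc l' = F * F ^ l'" by (simp only: power_Suc)
      show ?thesis unfolding Wf_def g f by (simp only: algebra_simps)
    qed
    finally show ?thesis using Suc by simp
  next
    case False
    then have z: "n choose Suc l' = 0" by simp
    have e: "Suc n - Suc l' = n - l'" by simp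
    have "Wf F G (Suc n) l = fps_const (n choose l') * (F ^ Suc l' * G ^ (n - l'))"
      unfolding Wf_def Suc e by (simp add: z)
    also have "\<dots> = F * Wf F G n l' + G * Wf F G n (Suc l')"
      unfolding Wf_def by (simp add: z algebra_simps)
    finally show ?thesis using Suc by simp
  qed
qed

lemma Wf_0: "Wf F G 0 l = (if l = 0 then 1 else 0)"
  by (simp add: Wf_def)

definition Vset :: "'a set set \<Rightarrow> 'a set set \<Rightarrow> nat \<Rightarrow> nat \<Rightarrow> nat \<Rightarrow> 'a set list set" where
  "Vset HS ES n l k = {Ls. length Ls = n \<and> set Ls \<subseteq> HS \<union> ES \<and> length (filter (\<lambda>X. X \<in> HS) Ls) = l \<and> sum_list (map card Ls) = k}"

context
  fixes HS ES :: "'a set set"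
  assumes finH: "finite HS" and finE: "finite ES" and disj: "HS \<inter> ES = {}"
begin

lemma finite_Vset: "finite (Vset HS ES n l k)"
proof (rule finite_subset)
  show "Vset HS ES n l k \<subseteq> {Ls. set Ls \<subseteq> HS \<union> ES \<and> length Ls = n}" by (auto simp: Vset_def)
  show "finite {Ls. set Ls \<subseteq> HS \<union> ES \<and> length Ls = n}" by (rule finite_lists_length_eq) (use finH finE in simp)
qed

lemma Vset_0: "Vset HS ES 0 l k = (if l = 0 \<and> k = 0 then {[]} else {})"
  by (auto simp: Vset_def)

lemma Vset_Suc: "Vset HS ES (Suc n) l k =
   (\<Union>X\<in>{X\<in>HS. card X \<le> k \<and> 1 \<le> l}. (#) X ` Vset HS ES n (l - 1) (k - card X)) \<union>
   (\<Union>X\<in>{X\<in>ES. card X \<le> k}. (#) X ` Vset HS ES n l (k - card X))"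
proof (rule set_eqI)
  fix Ls
  show "Ls \<in> Vset HS ES (Suc n) l k \<longleftrightarrow> Ls \<in> (\<Union>X\<in>{X\<in>HS. card X \<le> k \<and> 1 \<le> l}. (#) X ` Vset HS ES n (l - 1) (k - card X)) \<union>
   (\<Union>X\<in>{X\<in>ES. card X \<le> k}. (#) X ` Vset HS ES n l (k - card X))"
  proof
    assume "Ls \<in> Vset HS ES (Suc n) l k"
    then obtain X Ms where Ls: "Ls = X # Ms" "length Ms = n" "X \<in> HS \<union> ES" "set Ms \<subseteq> HS \<union> ES"
      "length (filter (\<lambda>X. X \<in> HS) (X # Ms)) = l" "card X + sum_list (map card Ms) = k"
      unfolding Vset_def by (cases Ls) auto
    show "Ls \<in> (\<Union>X\<in>{X\<in>HS. card X \<le> k \<and> 1 \<le> l}. (#) X ` Vset HS ES n (l - 1) (k - card X)) \<union>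
   (\<Union>X\<in>{X\<in>ES. card X \<le> k}. (#) X ` Vset HS ES n l (k - card X))"
    proof (cases "X \<in> HS")
      case True
      then have "Ms \<in> Vset HS ES n (l - 1) (k - card X)" "1 \<le> l" "card X \<le> k" using Ls by (auto simp: Vset_def)
      then show ?thesis using Ls(1) True by blast
    next
      case False
      then have "X \<in> ES" using Ls by blast
      moreover have "Ms \<in> Vset HS ES n l (k - card X)" "card X \<le> k" using Ls False by (auto simp: Vset_def)
      ultimately show ?thesis using Ls(1) by blast
    qed
  next
    assume "Ls \<in> (\<Union>X\<in>{X\<in>HS. card X \<le> k \<and> 1 \<le> l}. (#) X ` Vset HS ES n (l - 1) (k - card X)) \<union>
   (\<Union>X\<in>{X\<in>ES. card X \<le> k}. (#) X ` Vset HS ES n l (k - card X))"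
    then show "Ls \<in> Vset HS ES (Suc n) l k"
    proof
      assume "Ls \<in> (\<Union>X\<in>{X\<in>HS. card X \<le> k \<and> 1 \<le> l}. (#) X ` Vset HS ES n (l - 1) (k - card X))"
      then obtain X Ms where "X \<in> HS" "card X \<le> k" "1 \<le> l" "Ms \<in> Vset HS ES n (l - 1) (k - card X)" "Ls = X # Ms"
        by blast
      then show ?thesis by (auto simp: Vset_def)
    next
      assume "Ls \<in> (\<Union>X\<in>{X\<in>ES. card X \<le> k}. (#) X ` Vset HS ES n l (k - card X))"
      then obtain X Ms where X: "X \<in> ES" "card X \<le> k" "Ms \<in> Vset HS ES n l (k - card X)" "Ls = X # Ms"
        by blast
      then have "X \<notin> HS" using disj by blast
      then show ?thesis using X by (auto simp: Vset_def)
    qed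
  qed
qed

lemma sum_group_card:
  assumes "finite A"
  shows "(\<Sum>X\<in>{X\<in>A. card X \<le> k}. \<phi> (card X)) = (\<Sum>j\<le>k. card {X\<in>A. card X = j} * (\<phi> j :: nat))"
proof -
  have "(\<Sum>X\<in>{X\<in>A. card X \<le> k}. \<phi> (card X)) = (\<Sum>j\<le>k. \<Sum>X\<in>{X \<in> {X\<in>A. card X \<le> k}. card X = j}. \<phi> (card X))"
    by (rule sum.group[symmetric]) (use assms in auto)
  also have "\<dots> = (\<Sum>j\<le>k. card {X\<in>A. card X = j} * \<phi> j)"
  proof (rule sum.cong[OF refl])
    fix j assume "j \<in> {..k}"
    then have "{X \<in> {X\<in>A. card X \<le> k}. card X = j} = {X\<in>A. card X = j}" by auto
    then show "(\<Sum>X\<in>{X \<in> {X\<in>A. card X \<le> k}. card X = j}. \<phi> (card X)) = card {X\<in>A. card X = j} * \<phi> j"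
      by simp
  qed
  finally show ?thesis .
qed

lemma card_Vset_Suc: "card (Vset HS ES (Suc n) l k) =
   (if l = 0 then 0 else (\<Sum>j\<le>k. card {X\<in>HS. card X = j} * card (Vset HS ES n (l - 1) (k - j)))) +
   (\<Sum>j\<le>k. card {X\<in>ES. card X = j} * card (Vset HS ES n l (k - j)))"
proof -
  let ?U1 = "\<Union>X\<in>{X\<in>HS. card X \<le> k \<and> 1 \<le> l}. (#) X ` Vset HS ES n (l - 1) (k - card X)"
  let ?U2 = "\<Union>X\<in>{X\<in>ES. card X \<le> k}. (#) X ` Vset HS ES n l (k - card X)"
  have f1: "finite ?U1" using finH finite_Vset by auto
  have f2: "finite ?U2" using finE finite_Vset by auto
  have d: "?U1 \<inter> ?U2 = {}" using disj by auto
  have c1: "card ?U1 = (\<Sum>X\<in>{X\<in>HS. card X \<le> k \<and> 1 \<le> l}. card (Vset HS ES n (l - 1) (k - card X)))"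
    by (subst card_UN_disjoint) (use finH finite_Vset in \<open>auto simp: card_image\<close>)
  have c2: "card ?U2 = (\<Sum>X\<in>{X\<in>ES. card X \<le> k}. card (Vset HS ES n l (k - card X)))"
    by (subst card_UN_disjoint) (use finE finite_Vset in \<open>auto simp: card_image\<close>)
  have c1': "card ?U1 = (if l = 0 then 0 else (\<Sum>j\<le>k. card {X\<in>HS. card X = j} * card (Vset HS ES n (l - 1) (k - j))))"
  proof (cases "l = 0")
    case True then show ?thesis by simp
  next
    case False
    then have "{X\<in>HS. card X \<le> k \<and> 1 \<le> l} = {X\<in>HS. card X \<le> k}" by auto
    then show ?thesis using c1 False sum_group_card[OF finH, of "\<lambda>j. card (Vset HS ES n (l - 1) (k - j))" k] by simp
  qed
  have c2': "card ?U2 = (\<Sum>j\<le>k. card {X\<in>ES. card X = j} * card (Vset HS ES n l (k - j)))"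
    using c2 sum_group_card[OF finE, of "\<lambda>j. card (Vset HS ES n l (k - j))" k] by simp
  show ?thesis unfolding Vset_Suc card_Un_disjoint[OF f1 f2 d] c1' c2' ..
qed

lemma card_Vset: "card (Vset HS ES n l k) =
   Wf (Abs_fps (\<lambda>j. card {X\<in>HS. card X = j})) (Abs_fps (\<lambda>j. card {X\<in>ES. card X = j})) n l $ k"
proof (induction n arbitrary: l k)
  case 0 then show ?case by (simp add: Vset_0 Wf_0)
next
  case (Suc n)
  let ?F = "Abs_fps (\<lambda>j. card {X\<in>HS. card X = j})" and ?G = "Abs_fps (\<lambda>j. card {X\<in>ES. card X = j})"
  have "Wf ?F ?G (Suc n) l $ k = (if l = 0 then 0 else (?F * Wf ?F ?G n (l - 1)) $ k) + (?G * Wf ?F ?G n l) $ k"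
    unfolding Wf_rec by simp
  also have "\<dots> = (if l = 0 then 0 else (\<Sum>j\<le>k. card {X\<in>HS. card X = j} * card (Vset HS ES n (l - 1) (k - j)))) +
   (\<Sum>j\<le>k. card {X\<in>ES. card X = j} * card (Vset HS ES n l (k - j)))"
    by (simp add: fps_mult_nth atLeast0AtMost Suc.IH)
  finally show ?case using card_Vset_Suc by simp
qed

end


lemma gl_cong: "(\<And>i. i < m \<Longrightarrow> Cs i = Cs' i) \<Longrightarrow> gl m rX r'X Cs = gl m rX r'X Cs'"
  unfolding gl_def by auto

lemma card_gl:
  assumes fin: "\<And>i. i < m \<Longrightarrow> finite (Cs i)"
  shows "card (gl m b False Cs) = (if b then 1 else 0) + (\<Sum>i<m. card (Cs i - {None}))"
proof -
  have eq: "gl m b False Cs = (if b then {Some []} else {}) \<union> (\<Union>i<m. emb i ` (Cs i - {None}))"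
    unfolding gl_def by simp
  have fU: "finite (\<Union>i<m. emb i ` (Cs i - {None}))" using fin by auto
  have dj: "(if b then {Some []} else {}) \<inter> (\<Union>i<m. emb i ` (Cs i - {None})) = {}" by auto
  have cU: "card (\<Union>i<m. emb i ` (Cs i - {None})) = (\<Sum>i<m. card (emb i ` (Cs i - {None})))"
  proof (rule card_UN_disjoint)
    show "\<forall>i\<in>{..<m}. \<forall>j\<in>{..<m}. i \<noteq> j \<longrightarrow> emb i ` (Cs i - {None}) \<inter> emb j ` (Cs j - {None}) = {}"
      using emb_inj by fastforce
  qed (use fin in auto)
  have ci: "card (emb i ` (Cs i - {None})) = card (Cs i - {None})" for i
    by (rule card_image) (simp add: inj_on_def emb_inj1)
  have nU: "Some [] \<notin> (\<Union>i<m. emb i ` (Cs i - {None}))" by auto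
  have "card (\<Union>i<m. emb i ` (Cs i - {None})) = (\<Sum>i<m. card (Cs i - {None}))" unfolding cU ci ..
  then show ?thesis unfolding eq using fU nU by (cases b) simp_all
qed

lemma finite_sub_V: "X \<subseteq> tverts m k \<Longrightarrow> finite X"
  using finite_subset finite_tverts by blast

lemma count_bij:
  assumes h: "1 \<le> h"
  shows "card {S. S \<subseteq> tverts m h - {None} \<and> (Some [] \<in> S \<longleftrightarrow> b) \<and> R (map (\<lambda>i. sub i S) [0..<m]) \<and> card S = k}
    = card {Ls. length Ls = m \<and> set Ls \<subseteq> Pow (tverts m (h - 1) - {None}) \<and> R Ls \<and> (if b then 1 else 0) + sum_list (map card Ls) = k}"
proof (rule bij_betw_same_card)
  let ?A = "{S. S \<subseteq> tverts m h - {None} \<and> (Some [] \<in> S \<longleftrightarrow> b) \<and> R (map (\<lambda>i. sub i S) [0..<m]) \<and> card S = k}"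
  let ?B = "{Ls. length Ls = m \<and> set Ls \<subseteq> Pow (tverts m (h - 1) - {None}) \<and> R Ls \<and> (if b then 1 else 0) + sum_list (map card Ls) = k}"
  let ?phi = "\<lambda>S. map (\<lambda>i. sub i S) [0..<m]"
  let ?psi = "\<lambda>Ls. gl m b False (\<lambda>i. Ls ! i)"
  have psiphi: "?psi (?phi S) = S" if "S \<subseteq> tverts m h - {None}" "Some [] \<in> S \<longleftrightarrow> b" for S
  proof -
    have "?psi (?phi S) = gl m b False (\<lambda>i. sub i S)" by (rule gl_cong) simp
    also have "\<dots> = S" using decomp[OF h that(1)] that(2) by simp
    finally show ?thesis .
  qed
  have subgl: "sub i (gl m b False Cs) = Cs i - {None}" if "i < m" for i Cs
  proof (rule set_eqI)
    fix y show "y \<in> sub i (gl m b False Cs) \<longleftrightarrow> y \<in> Cs i - {None}"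
    proof (cases "y = None")
      case True then show ?thesis by (simp add: sub_def)
    next
      case False then show ?thesis using gl_emb[OF that False, of b False Cs] by (simp add: sub_def)
    qed
  qed
  have phipsi: "?phi (?psi Ls) = Ls" if "length Ls = m" "set Ls \<subseteq> Pow (tverts m (h - 1) - {None})" for Ls
  proof (rule nth_equalityI)
    show "length (?phi (?psi Ls)) = length Ls" using that by simp
    fix i assume "i < length (?phi (?psi Ls))"
    then have i: "i < m" by simp
    have "Ls ! i \<in> set Ls" using i that(1) by simp
    then have "None \<notin> Ls ! i" using that(2) by blast
    then show "?phi (?psi Ls) ! i = Ls ! i" using i subgl by simp
  qed
  have cardpsi: "card (?psi Ls) = (if b then 1 else 0) + sum_list (map card Ls)"
    if "length Ls = m" "set Ls \<subseteq> Pow (tverts m (h - 1) - {None})" for Ls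
  proof -
    have fin: "finite (Ls ! i)" if "i < m" for i
    proof -
      have "Ls ! i \<in> set Ls" using \<open>length Ls = m\<close> that by simp
      then show ?thesis using \<open>set Ls \<subseteq> _\<close> finite_sub_V[of "Ls ! i" m "h - 1"] by blast
    qed
    have "card (?psi Ls) = (if b then 1 else 0) + (\<Sum>i<m. card (Ls ! i - {None}))" by (rule card_gl) (rule fin)
    also have "(\<Sum>i<m. card (Ls ! i - {None})) = (\<Sum>i<m. card (Ls ! i))"
    proof (rule sum.cong[OF refl])
      fix i assume "i \<in> {..<m}"
      then have "Ls ! i \<in> set Ls" using \<open>length Ls = m\<close> by simp
      then have "None \<notin> Ls ! i" using that(2) by blast
      then show "card (Ls ! i - {None}) = card (Ls ! i)" by simp
    qed
    also have "\<dots> = sum_list (map card Ls)"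
      using that(1) by (simp add: sum_list_sum_nth atLeast0LessThan)
    finally show ?thesis .
  qed
  show "bij_betw ?phi ?A ?B"
  proof (rule bij_betw_byWitness[where f' = ?psi])
    show "\<forall>a\<in>?A. ?psi (?phi a) = a" using psiphi by blast
    show "\<forall>a'\<in>?B. ?phi (?psi a') = a'" using phipsi by blast
    show "?phi ` ?A \<subseteq> ?B"
    proof
      fix Ls assume "Ls \<in> ?phi ` ?A"
      then obtain S where S: "S \<in> ?A" "Ls = ?phi S" by blast
      have len: "length Ls = m" using S by simp
      have SS: "S \<subseteq> tverts m h - {None}" using S by simp
      have st: "set Ls \<subseteq> Pow (tverts m (h - 1) - {None})"
      proof
        fix X assume "X \<in> set Ls"
        then obtain i where "i < m" "X = sub i S" using S(2) by auto
        then show "X \<in> Pow (tverts m (h - 1) - {None})" using sub_sub[OF SS h \<open>i < m\<close>] by blast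
      qed
      have "card S = (if b then 1 else 0) + sum_list (map card Ls)"
        using cardpsi[OF len st] psiphi S by auto
      then show "Ls \<in> ?B" using S len st by auto
    qed
    show "?psi ` ?B \<subseteq> ?A"
    proof
      fix S assume "S \<in> ?psi ` ?B"
      then obtain Ls where L: "Ls \<in> ?B" "S = ?psi Ls" by blast
      have len: "length Ls = m" and st: "set Ls \<subseteq> Pow (tverts m (h - 1) - {None})" using L by auto
      have Ssub: "S \<subseteq> tverts m h" unfolding L(2)
      proof (rule gl_sub[OF h])
        fix i assume "i < m"
        then have "Ls ! i \<in> set Ls" using len by simp
        then show "Ls ! i \<subseteq> tverts m (h - 1)" using st by blast
      qed
      have "None \<notin> S" "Some [] \<in> S \<longleftrightarrow> b" using L(2) by auto
      moreover have "R (?phi S)" using phipsi[OF len st] L by simp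
      moreover have "card S = k" using cardpsi[OF len st] L by simp
      ultimately show "S \<in> ?A" using Ssub by blast
    qed
  qed
qed

lemma UV:
  assumes finH: "finite HS" and finE: "finite ES" and disj: "HS \<inter> ES = {}"
  shows "card {Ls. length Ls = n \<and> set Ls \<subseteq> HS \<union> ES \<and> P (length (filter (\<lambda>X. X \<in> HS) Ls)) \<and> sum_list (map card Ls) = k}
     = (\<Sum>l\<in>{l. l \<le> n \<and> P l}. card (Vset HS ES n l k))"
proof -
  have eq: "{Ls. length Ls = n \<and> set Ls \<subseteq> HS \<union> ES \<and> P (length (filter (\<lambda>X. X \<in> HS) Ls)) \<and> sum_list (map card Ls) = k}
     = (\<Union>l\<in>{l. l \<le> n \<and> P l}. Vset HS ES n l k)"
  proof (rule set_eqI)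
    fix Ls
    have "length (filter (\<lambda>X. X \<in> HS) Ls) \<le> length Ls" by simp
    then show "Ls \<in> {Ls. length Ls = n \<and> set Ls \<subseteq> HS \<union> ES \<and> P (length (filter (\<lambda>X. X \<in> HS) Ls)) \<and> sum_list (map card Ls) = k}
     \<longleftrightarrow> Ls \<in> (\<Union>l\<in>{l. l \<le> n \<and> P l}. Vset HS ES n l k)"
      by (auto simp: Vset_def)
  qed
  show ?thesis unfolding eq
  proof (rule card_UN_disjoint)
    show "finite {l. l \<le> n \<and> P l}" by simp
    show "\<forall>i\<in>{l. l \<le> n \<and> P l}. finite (Vset HS ES n i k)" using finite_Vset[OF finH finE disj] by blast
    show "\<forall>i\<in>{l. l \<le> n \<and> P l}. \<forall>j\<in>{l. l \<le> n \<and> P l}. i \<noteq> j \<longrightarrow> Vset HS ES n i k \<inter> Vset HS ES n j k = {}"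
      by (auto simp: Vset_def)
  qed
qed




lemma typeI_not_II: "typeI m k X \<Longrightarrow> \<not> typeII m k X"
  by (simp add: typeI_iff typeII_iff)

lemma finite_typeSets: "finite {X. typeII m k X}" "finite {X. typeI m k X}"
  by (rule finite_subset[of _ "Pow (tverts m k)"]; auto simp: typeI_iff typeII_iff)+

lemma typeSets_Pow: "{X. typeII m k X} \<union> {X. typeI m k X} \<subseteq> Pow (tverts m k - {None})"
  by (auto simp: typeI_iff typeII_iff)

lemma typeSets_disj: "{X. typeII m k X} \<inter> {X. typeI m k X} = {}"
  using typeI_not_II by blast

lemma brk:
  assumes "l \<le> m"
  shows "bracket m k l (int n) = card (Vset {X. typeII m k X} {X. typeI m k X} m l n)"
proof -
  let ?f = "\<lambda>i. Hcnt m k (int i)" and ?g = "\<lambda>i. Ecnt m k (int i)"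
  have fH: "Abs_fps (\<lambda>j. card {X\<in>{X. typeII m k X}. card X = j}) = Abs_fps ?f"
    by (simp add: Hcnt_def)
  have gE: "Abs_fps (\<lambda>j. card {X\<in>{X. typeI m k X}. card X = j}) = Abs_fps ?g"
    by (simp add: Ecnt_def)
  have "bracket m k l (int n) = (m choose l) * Q ?f ?g l (m - l) n"
    unfolding bracket_def by (rule bracket_sum[OF assms])
  also have "\<dots> = Wf (Abs_fps ?f) (Abs_fps ?g) m l $ n"
    by (simp add: Q_fps Wf_def)
  also have "\<dots> = card (Vset {X. typeII m k X} {X. typeI m k X} m l n)"
    using card_Vset[OF finite_typeSets(1)[of m k] finite_typeSets(2)[of m k] typeSets_disj[of m k], of m l n] fH gE by simp
  finally show ?thesis .
qed

lemma brk_pred: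
  assumes "l \<le> m"
  shows "bracket m k l (int n - 1) = (if n = 0 then 0 else card (Vset {X. typeII m k X} {X. typeI m k X} m l (n - 1)))"
proof (cases n)
  case 0
  have "{xs. length xs = m \<and> sorted (take l xs) \<and> sorted (drop l xs) \<and> int (sum_list xs) = -1} = {}" by auto
  then show ?thesis using 0 by (simp add: bracket_def)
next
  case (Suc n')
  then have "int n - 1 = int n'" by simp
  then show ?thesis using brk[OF assms, of k n'] Suc by simp
qed

context
  fixes m h :: nat
  assumes h: "1 \<le> h" and m2: "2 \<le> m"
begin

lemma count_main:
  "card {S. S \<subseteq> tverts m h - {None} \<and> (Some [] \<in> S \<longleftrightarrow> b) \<and>
      (\<forall>i<m. typeI m (h - 1) (sub i S) \<or> typeII m (h - 1) (sub i S)) \<and>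
      P (card {i. i < m \<and> typeII m (h - 1) (sub i S)}) \<and> card S = k}
   = (if b \<and> k = 0 then 0 else (\<Sum>l\<in>{l. l \<le> m \<and> P l}. card (Vset {X. typeII m (h - 1) X} {X. typeI m (h - 1) X} m l (if b then k - 1 else k))))"
proof -
  let ?HS = "{X. typeII m (h - 1) X}" and ?ES = "{X. typeI m (h - 1) X}"
  let ?R = "\<lambda>Ls. set Ls \<subseteq> ?HS \<union> ?ES \<and> P (length (filter (\<lambda>X. X \<in> ?HS) Ls))"
  have eqS: "{S. S \<subseteq> tverts m h - {None} \<and> (Some [] \<in> S \<longleftrightarrow> b) \<and>
      (\<forall>i<m. typeI m (h - 1) (sub i S) \<or> typeII m (h - 1) (sub i S)) \<and>
      P (card {i. i < m \<and> typeII m (h - 1) (sub i S)}) \<and> card S = k}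
    = {S. S \<subseteq> tverts m h - {None} \<and> (Some [] \<in> S \<longleftrightarrow> b) \<and> ?R (map (\<lambda>i. sub i S) [0..<m]) \<and> card S = k}"
  proof -
    have "(\<forall>i<m. typeI m (h - 1) (sub i S) \<or> typeII m (h - 1) (sub i S)) \<longleftrightarrow> set (map (\<lambda>i. sub i S) [0..<m]) \<subseteq> ?HS \<union> ?ES" for S
      by (auto simp: image_subset_iff atLeast0LessThan)
    moreover have "length (filter (\<lambda>X. X \<in> ?HS) (map (\<lambda>i. sub i S) [0..<m])) = card {i. i < m \<and> typeII m (h - 1) (sub i S)}" for S
    proof -
      have "{i. i < m \<and> typeII m (h - 1) (map (\<lambda>i. sub i S) [0..<m] ! i)} = {i. i < m \<and> typeII m (h - 1) (sub i S)}"
        by auto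
      then show ?thesis by (simp add: length_filter_conv_card)
    qed
    ultimately show ?thesis by auto
  qed
  have eqL: "{Ls. length Ls = m \<and> set Ls \<subseteq> Pow (tverts m (h - 1) - {None}) \<and> ?R Ls \<and> (if b then 1 else 0) + sum_list (map card Ls) = k}
     = (if b \<and> k = 0 then {} else {Ls. length Ls = m \<and> set Ls \<subseteq> ?HS \<union> ?ES \<and> P (length (filter (\<lambda>X. X \<in> ?HS) Ls)) \<and> sum_list (map card Ls) = (if b then k - 1 else k)})"
    using typeSets_Pow[of m "h - 1"] by auto
  have c1: "card {S. S \<subseteq> tverts m h - {None} \<and> (Some [] \<in> S \<longleftrightarrow> b) \<and> ?R (map (\<lambda>i. sub i S) [0..<m]) \<and> card S = k}
    = card {Ls. length Ls = m \<and> set Ls \<subseteq> Pow (tverts m (h - 1) - {None}) \<and> ?R Ls \<and> (if b then 1 else 0) + sum_list (map card Ls) = k}"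
    by (rule count_bij[OF h])
  show ?thesis
  proof (cases "b \<and> k = 0")
    case True
    show ?thesis unfolding eqS c1 eqL using True by simp
  next
    case False
    show ?thesis unfolding eqS c1 eqL if_not_P[OF False]
      by (rule UV[OF finite_typeSets(1)[of m "h - 1"] finite_typeSets(2)[of m "h - 1"] typeSets_disj[of m "h - 1"]])
  qed
qed

lemma card_m_iff: "card {i. i < m \<and> Pr i} = m \<longleftrightarrow> (\<forall>i<m. Pr i)"
proof
  assume c: "card {i. i < m \<and> Pr i} = m"
  have "{i. i < m \<and> Pr i} = {..<m}"
    by (rule card_subset_eq) (use c in auto)
  then show "\<forall>i<m. Pr i" by blast
next
  assume "\<forall>i<m. Pr i"
  then have "{i. i < m \<and> Pr i} = {..<m}" by auto
  then show "card {i. i < m \<and> Pr i} = m" by simp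
qed

lemma card_lt_iff: "card {i. i < m \<and> Pr i} < m \<longleftrightarrow> (\<exists>i<m. \<not> Pr i)"
proof -
  have "card {i. i < m \<and> Pr i} \<le> m" using card_mono[of "{..<m}" "{i. i < m \<and> Pr i}"] by auto
  then have "card {i. i < m \<and> Pr i} < m \<longleftrightarrow> card {i. i < m \<and> Pr i} \<noteq> m" by linarith
  then show ?thesis using card_m_iff[of Pr] by blast
qed

lemma card_0_iff: "card {i. i < m \<and> Pr i} = 0 \<longleftrightarrow> (\<forall>i<m. \<not> Pr i)"
  by auto

lemma Hmain: "Hcnt m h (int k) = (if odd h then bracket m (h - 1) 1 (int k) else bracket m (h - 1) m (int k))"
proof -
  define L where "L = (if odd h then 1 else m)"
  have Lm: "L \<le> m" using m2 by (simp add: L_def)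
  have eq: "{S. typeII m h S \<and> int (card S) = int k} =
    {S. S \<subseteq> tverts m h - {None} \<and> (Some [] \<in> S \<longleftrightarrow> False) \<and>
      (\<forall>i<m. typeI m (h - 1) (sub i S) \<or> typeII m (h - 1) (sub i S)) \<and>
      (\<lambda>l. l = L) (card {i. i < m \<and> typeII m (h - 1) (sub i S)}) \<and> card S = k}"
  proof (rule set_eqI)
    fix S
    show "S \<in> {S. typeII m h S \<and> int (card S) = int k} \<longleftrightarrow> S \<in> {S. S \<subseteq> tverts m h - {None} \<and> (Some [] \<in> S \<longleftrightarrow> False) \<and>
      (\<forall>i<m. typeI m (h - 1) (sub i S) \<or> typeII m (h - 1) (sub i S)) \<and>
      (\<lambda>l. l = L) (card {i. i < m \<and> typeII m (h - 1) (sub i S)}) \<and> card S = k}"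
    proof (cases "S \<subseteq> tverts m h - {None}")
      case True
      show ?thesis using True clsII[OF h m2 True] card_m_iff[of "\<lambda>i. typeII m (h - 1) (sub i S)"]
        by (auto simp: L_def)
    next
      case False then show ?thesis by (auto simp: typeII_iff)
    qed
  qed
  have "{l. l \<le> m \<and> l = L} = {L}" using Lm by auto
  then have "Hcnt m h (int k) = card (Vset {X. typeII m (h - 1) X} {X. typeI m (h - 1) X} m L k)"
    using count_main[of False "\<lambda>l. l = L" k] unfolding Hcnt_def eq by simp
  also have "\<dots> = bracket m (h - 1) L (int k)" using brk[OF Lm] by simp
  finally show ?thesis by (simp add: L_def)
qed

lemma Emain: "Ecnt m h (int k) =
            (if odd h
             then bracket m (h - 1) 0 (int k) + (\<Sum>l\<le>m. bracket m (h - 1) l (int k - 1))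
             else (\<Sum>l<m. bracket m (h - 1) l (int k)) + (\<Sum>l\<le>m. bracket m (h - 1) l (int k - 1)))"
proof -
  define PE where "PE = (\<lambda>l::nat. if odd h then l = 0 else l < m)"
  let ?A = "{S. S \<subseteq> tverts m h - {None} \<and> (Some [] \<in> S \<longleftrightarrow> True) \<and>
      (\<forall>i<m. typeI m (h - 1) (sub i S) \<or> typeII m (h - 1) (sub i S)) \<and>
      (\<lambda>l. True) (card {i. i < m \<and> typeII m (h - 1) (sub i S)}) \<and> card S = k}"
  let ?B = "{S. S \<subseteq> tverts m h - {None} \<and> (Some [] \<in> S \<longleftrightarrow> False) \<and>
      (\<forall>i<m. typeI m (h - 1) (sub i S) \<or> typeII m (h - 1) (sub i S)) \<and>
      PE (card {i. i < m \<and> typeII m (h - 1) (sub i S)}) \<and> card S = k}"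
  have eq: "{S. typeI m h S \<and> int (card S) = int k} = ?A \<union> ?B"
  proof (rule set_eqI)
    fix S
    show "S \<in> {S. typeI m h S \<and> int (card S) = int k} \<longleftrightarrow> S \<in> ?A \<union> ?B"
    proof (cases "S \<subseteq> tverts m h - {None}")
      case True
      have ex: "typeI m (h - 1) (sub i S) \<longleftrightarrow> \<not> typeII m (h - 1) (sub i S)"
        if "typeI m (h - 1) (sub i S) \<or> typeII m (h - 1) (sub i S)" for i
        using that typeI_not_II by blast
      show ?thesis
      proof (cases "\<forall>i<m. typeI m (h - 1) (sub i S) \<or> typeII m (h - 1) (sub i S)")
        case all: True
        have o: "(\<forall>i<m. typeI m (h - 1) (sub i S)) \<longleftrightarrow> card {i. i < m \<and> typeII m (h - 1) (sub i S)} = 0"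
          using card_0_iff[of "\<lambda>i. typeII m (h - 1) (sub i S)"] ex all by auto
        have e: "(\<exists>i<m. typeI m (h - 1) (sub i S)) \<longleftrightarrow> card {i. i < m \<and> typeII m (h - 1) (sub i S)} < m"
          using card_lt_iff[of "\<lambda>i. typeII m (h - 1) (sub i S)"] ex all by auto
        show ?thesis using True clsI[OF h m2 True] all o e by (auto simp: PE_def)
      next
        case False then show ?thesis using True clsI[OF h m2 True] by auto
      qed
    next
      case False then show ?thesis by (auto simp: typeI_iff)
    qed
  qed
  have fA: "finite ?A" by (rule finite_subset[of _ "Pow (tverts m h)"]) auto
  have fB: "finite ?B" by (rule finite_subset[of _ "Pow (tverts m h)"]) auto
  have dAB: "?A \<inter> ?B = {}" by auto
  have cA: "card ?A = (\<Sum>l\<le>m. bracket m (h - 1) l (int k - 1))"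
  proof -
    have s: "{l. l \<le> m \<and> True} = {..m}" by auto
    have "card ?A = (if k = 0 then 0 else (\<Sum>l\<le>m. card (Vset {X. typeII m (h - 1) X} {X. typeI m (h - 1) X} m l (k - 1))))"
      using count_main[of True "\<lambda>l. True" k] unfolding s by simp
    also have "\<dots> = (\<Sum>l\<le>m. bracket m (h - 1) l (int k - 1))"
      using brk_pred by (simp add: sum.neutral)
    finally show ?thesis .
  qed
  have cB: "card ?B = (if odd h then bracket m (h - 1) 0 (int k) else (\<Sum>l<m. bracket m (h - 1) l (int k)))"
  proof (cases "odd h")
    case True
    then have s: "{l. l \<le> m \<and> PE l} = {0}" by (auto simp: PE_def)
    show ?thesis using count_main[of False PE k] True brk[of 0 m "h - 1" k] unfolding s by simp
  next
    case False
    then have s: "{l. l \<le> m \<and> PE l} = {..<m}" by (auto simp: PE_def)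
    show ?thesis using count_main[of False PE k] False brk unfolding s by simp
  qed
  show ?thesis unfolding Ecnt_def eq card_Un_disjoint[OF fA fB dAB] cA cB by simp
qed

end

theorem mainTheorem8:
  fixes m h :: nat
  assumes "m \<ge> 2" and "h \<ge> 1"
  shows "(\<forall>S. typeII m h S \<longrightarrow>
            (if odd h
             then (\<exists>i<m. closed_nbhd (tverts m h) (tadj m h) {Some []}
                          - pd_obs_inf (tverts m h) (tadj m h) S = {None, Some [i]})
             else closed_nbhd (tverts m h) (tadj m h) {Some []}
                          - pd_obs_inf (tverts m h) (tadj m h) S = {None, Some []}))
       \<and> (\<forall>k::nat. Hcnt m h (int k) =
            (if odd h then bracket m (h - 1) 1 (int k) else bracket m (h - 1) m (int k)))
       \<and> (\<forall>k::nat. Ecnt m h (int k) =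
            (if odd h
             then bracket m (h - 1) 0 (int k) + (\<Sum>l\<le>m. bracket m (h - 1) l (int k - 1))
             else (\<Sum>l<m. bracket m (h - 1) l (int k)) + (\<Sum>l\<le>m. bracket m (h - 1) l (int k - 1))))"
  using part1[OF assms(1) assms(2)] Hmain[OF assms(2) assms(1)] Emain[OF assms(2) assms(1)] by blast


end
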